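(* Let $\lambda$ be a character of $\mathcal{G}r'$. Then $\lambda$ is invertible for the product $\star$ if and only if $\lambda(\bullet_A)\neq0$ for every nonempty finite set $A$, where $\bullet_A\in\mathcal{G}r'[A]$ is the graph with the single vertex $A$.
   Context: Work over a field $\mathbb{K}$. $\mathcal{G}r'[A]$ is the vector space spanned by simple graphs $G$ whose vertex set is a partition of the finite set $A$ into nonempty blocks; bijections act on the elements of $A$; the product is disjoint union of graphs. An equivalence $\sim$ on $A$ satisfies $\sim\triangleleft G$ if elements in the same vertex of $G$ are equivalent and the induced subgraph $G_{\mid C}$ (on the vertices contained in $C$) is connected for each class $C$; then $G\mid\sim$ is the disjoint union of the $G_{\mid C}$ and $G/\sim$ has the classes of $\sim$ as vertices, two distinct classes being adjacent iff some edge of $G$ joins vertices contained in them. A character of $\mathcal{G}r'$ is a family of linear forms $\lambda[A]:\mathcal{G}r'[A]\to\mathbb{K}$ invariant under bijections, with $\lambda(GH)=\lambda(G)\lambda(H)$ and $\lambda(\text{empty graph})=1$. The product of characters is $(\lambda\star\mu)(G)=\sum_{\sim\triangleleft G}\lambda(G/\sim)\mu(G\mid\sim)$; its unit is $\varepsilon'$, with $\varepsilon'(G)=1$ if $G$ has no edge and $0$ otherwise. *)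

theory Defs
  imports Main
begin

text \<open>A graph of Gr' is represented by a pair (V, E): V is a partition of the finite
  ground set A = Union V into nonempty blocks (the vertices), E is a set of
  two-element sets of vertices (the edges).  Ground elements are taken in nat
  (any finite set is in bijection with a finite subset of nat, and characters are
  invariant under bijections).  Linear forms on the span of graphs are identified
  with their values on the basis of graphs.\<close>

type_synonym graph = "nat set set \<times> nat set set set"

definition partition_of :: "'a set set \<Rightarrow> 'a set \<Rightarrow> bool" where
  "partition_of P A \<longleftrightarrow> (\<forall>B\<in>P. B \<noteq> {}) \<and> (\<forall>B\<in>P. \<forall>C\<in>P. B \<noteq> C \<longrightarrow> B \<inter> C = {})
     \<and> \<Union>P = A"

definition is_graph :: "graph \<Rightarrow> bool" where
  "is_graph G \<longleftrightarrow> finite (\<Union>(fst G)) \<and> partition_of (fst G) (\<Union>(fst G)) \<and>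
     (\<forall>e\<in>snd G. \<exists>v w. v \<in> fst G \<and> w \<in> fst G \<and> v \<noteq> w \<and> e = {v, w})"

definition map_graph :: "(nat \<Rightarrow> nat) \<Rightarrow> graph \<Rightarrow> graph" where
  "map_graph f G = ((`) f ` fst G, (`) ((`) f) ` snd G)"

definition graph_union :: "graph \<Rightarrow> graph \<Rightarrow> graph" where
  "graph_union G H = (fst G \<union> fst H, snd G \<union> snd H)"

definition empty_graph :: graph where
  "empty_graph = ({}, {})"

definition character :: "(graph \<Rightarrow> 'k::field) \<Rightarrow> bool" where
  "character lam \<longleftrightarrow>
     (\<forall>G f. is_graph G \<and> inj_on f (\<Union>(fst G)) \<longrightarrow> lam (map_graph f G) = lam G) \<and>
     (\<forall>G H. is_graph G \<and> is_graph H \<and> \<Union>(fst G) \<inter> \<Union>(fst H) = {} \<longrightarrow>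
            lam (graph_union G H) = lam G * lam H) \<and>
     lam empty_graph = 1"

definition connected_on :: "nat set set set \<Rightarrow> nat set set \<Rightarrow> bool" where
  "connected_on E W \<longleftrightarrow> W \<noteq> {} \<and>
     (\<forall>v\<in>W. \<forall>w\<in>W. (v, w) \<in> {(x, y). x \<in> W \<and> y \<in> W \<and> {x, y} \<in> E}\<^sup>*)"

text \<open>An equivalence on A, given by its set of classes P, with P \<lhd> G.\<close>
definition admissible :: "nat set set \<Rightarrow> graph \<Rightarrow> bool" where
  "admissible P G \<longleftrightarrow> partition_of P (\<Union>(fst G)) \<and>
     (\<forall>v\<in>fst G. \<exists>C\<in>P. v \<subseteq> C) \<and>
     (\<forall>C\<in>P. connected_on (snd G) {v \<in> fst G. v \<subseteq> C})"

text \<open>G | ~ : disjoint union of the induced subgraphs on the classes.\<close>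
definition restr_graph :: "graph \<Rightarrow> nat set set \<Rightarrow> graph" where
  "restr_graph G P = (fst G, {e \<in> snd G. \<exists>C\<in>P. \<Union>e \<subseteq> C})"

definition quot_graph :: "graph \<Rightarrow> nat set set \<Rightarrow> graph" where
  "quot_graph G P = (P, {{C, D} | C D. C \<in> P \<and> D \<in> P \<and> C \<noteq> D \<and>
       (\<exists>v w. {v, w} \<in> snd G \<and> v \<subseteq> C \<and> w \<subseteq> D)})"

definition char_prod :: "(graph \<Rightarrow> 'k::field) \<Rightarrow> (graph \<Rightarrow> 'k) \<Rightarrow> graph \<Rightarrow> 'k" where
  "char_prod lam mu G = (\<Sum>P\<in>{P. admissible P G}. lam (quot_graph G P) * mu (restr_graph G P))"

definition eps' :: "graph \<Rightarrow> 'k::field" where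
  "eps' G = (if snd G = {} then 1 else 0)"

definition char_invertible :: "(graph \<Rightarrow> 'k::field) \<Rightarrow> bool" where
  "char_invertible lam \<longleftrightarrow> (\<exists>mu. character mu \<and>
     (\<forall>G. is_graph G \<longrightarrow> char_prod lam mu G = eps' G \<and> char_prod mu lam G = eps' G))"

definition bullet :: "nat set \<Rightarrow> graph" where
  "bullet A = ({A}, {})"

end

theory Submission
  imports Defs
begin

lemma rtrancl_hom:
  assumes "(x,y) \<in> r\<^sup>*" and "\<And>a b. (a,b) \<in> r \<Longrightarrow> (f a, f b) \<in> s\<^sup>*"
  shows "(f x, f y) \<in> s\<^sup>*"
  using assms(1)
proof (induction rule: rtrancl_induct)
  case base then show ?case by simp
next
  case (step y z)
  then show ?case using assms(2) by (meson rtrancl_trans)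
qed

lemma partition_disj: "partition_of P A \<Longrightarrow> B \<in> P \<Longrightarrow> C \<in> P \<Longrightarrow> B \<noteq> C \<Longrightarrow> B \<inter> C = {}"
  unfolding partition_of_def by simp

lemma partition_ne: "partition_of P A \<Longrightarrow> B \<in> P \<Longrightarrow> B \<noteq> {}"
  unfolding partition_of_def by simp

lemma partition_Un: "partition_of P A \<Longrightarrow> \<Union>P = A"
  unfolding partition_of_def by simp

lemma partition_eq:
  assumes "partition_of P A" "C \<in> P" "D \<in> P" "x \<in> C" "x \<in> D"
  shows "C = D"
proof (rule ccontr)
  assume "C \<noteq> D"
  then have "C \<inter> D = {}" using partition_disj[OF assms(1-3)] by simp
  then show False using assms(4,5) by (simp add: disjoint_iff)
qed

lemma partition_sub_eq:
  assumes "partition_of P A" "C \<in> P" "D \<in> P" "v \<subseteq> C" "v \<subseteq> D" "v \<noteq> {}"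
  shows "C = D"
proof -
  obtain x where "x \<in> v" using assms(6) by auto
  then show ?thesis using partition_eq[OF assms(1-3)] assms(4,5) by auto
qed

lemma is_graphD:
  assumes "is_graph G"
  shows "finite (\<Union>(fst G))" "partition_of (fst G) (\<Union>(fst G))"
    "\<And>e. e \<in> snd G \<Longrightarrow> \<exists>v w. v \<in> fst G \<and> w \<in> fst G \<and> v \<noteq> w \<and> e = {v, w}"
  using assms unfolding is_graph_def by simp_all

lemma graph_vne: "is_graph G \<Longrightarrow> v \<in> fst G \<Longrightarrow> v \<noteq> {}"
  using is_graphD(2) partition_ne by blast

lemma graph_veq: "is_graph G \<Longrightarrow> v \<in> fst G \<Longrightarrow> w \<in> fst G \<Longrightarrow> x \<in> v \<Longrightarrow> x \<in> w \<Longrightarrow> v = w"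
  using is_graphD(2) partition_eq by metis

lemma graph_vsub: "is_graph G \<Longrightarrow> v \<in> fst G \<Longrightarrow> w \<in> fst G \<Longrightarrow> v \<subseteq> w \<Longrightarrow> v = w"
  using is_graphD(2) partition_sub_eq graph_vne by (metis order_refl)

lemma graph_edge_in: "is_graph G \<Longrightarrow> {x, y} \<in> snd G \<Longrightarrow> x \<in> fst G \<and> y \<in> fst G \<and> x \<noteq> y"
proof -
  assume g: "is_graph G" and e: "{x, y} \<in> snd G"
  obtain v w where "v \<in> fst G" "w \<in> fst G" "v \<noteq> w" "{x, y} = {v, w}"
    using is_graphD(3)[OF g e] by blast
  then show ?thesis by (auto simp: doubleton_eq_iff)
qed

lemma graph_finite_V: "is_graph G \<Longrightarrow> finite (fst G)"
  unfolding is_graph_def by (meson finite_UnionD)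

lemma graph_finite_E: "is_graph G \<Longrightarrow> finite (snd G)"
proof -
  assume g: "is_graph G"
  have "snd G \<subseteq> Pow (fst G)" using is_graphD(3)[OF g] by blast
  then show ?thesis using graph_finite_V[OF g] by (meson finite_Pow_iff finite_subset)
qed

lemma conn_closed:
  assumes "connected_on E W" "v \<in> W" "v \<in> S"
    "\<And>x y. x \<in> W \<Longrightarrow> y \<in> W \<Longrightarrow> {x, y} \<in> E \<Longrightarrow> x \<in> S \<Longrightarrow> y \<in> S"
  shows "W \<subseteq> S"
proof
  fix u assume u: "u \<in> W"
  have "(v, u) \<in> {(x, y). x \<in> W \<and> y \<in> W \<and> {x, y} \<in> E}\<^sup>*"
    using assms(1,2) u unfolding connected_on_def by blast
  then show "u \<in> S"
    by (induction rule: rtrancl_induct) (use assms(3,4) in auto)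
qed

lemma connected_on_mono:
  assumes "connected_on E W" "\<And>x y. x \<in> W \<Longrightarrow> y \<in> W \<Longrightarrow> {x, y} \<in> E \<Longrightarrow> {x, y} \<in> E'"
  shows "connected_on E' W"
proof -
  have "{(x, y). x \<in> W \<and> y \<in> W \<and> {x, y} \<in> E} \<subseteq> {(x, y). x \<in> W \<and> y \<in> W \<and> {x, y} \<in> E'}"
    using assms(2) by auto
  then show ?thesis using assms(1) unfolding connected_on_def
    by (meson rtrancl_mono subsetD)
qed


definition crel :: "nat set set set \<Rightarrow> nat set set \<Rightarrow> (nat set \<times> nat set) set" where
  "crel E W = {(x, y). x \<in> W \<and> y \<in> W \<and> {x, y} \<in> E}"

lemma connected_on_alt: "connected_on E W \<longleftrightarrow> W \<noteq> {} \<and> (\<forall>v\<in>W. \<forall>w\<in>W. (v, w) \<in> (crel E W)\<^sup>*)"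
  unfolding connected_on_def crel_def by simp

lemma crel_sym: "(a, b) \<in> (crel E W)\<^sup>* \<Longrightarrow> (b, a) \<in> (crel E W)\<^sup>*"
proof (induction rule: rtrancl_induct)
  case base then show ?case by simp
next
  case (step y z)
  then have "(z, y) \<in> crel E W" unfolding crel_def by (simp add: insert_commute)
  then show ?case using step(3) by (meson converse_rtrancl_into_rtrancl)
qed

lemma crel_in: "(a, b) \<in> (crel E W)\<^sup>* \<Longrightarrow> a \<in> W \<Longrightarrow> b \<in> W"
  by (induction rule: rtrancl_induct) (auto simp: crel_def)

lemma admD:
  assumes "admissible P G"
  shows "partition_of P (\<Union>(fst G))" "\<And>v. v \<in> fst G \<Longrightarrow> \<exists>C\<in>P. v \<subseteq> C"
    "\<And>C. C \<in> P \<Longrightarrow> connected_on (snd G) {v \<in> fst G. v \<subseteq> C}"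
  using assms unfolding admissible_def by simp_all

lemma adm_cls_unique:
  assumes "is_graph G" "admissible P G" "v \<in> fst G" "C \<in> P" "D \<in> P" "v \<subseteq> C" "v \<subseteq> D"
  shows "C = D"
  using partition_sub_eq[OF admD(1)[OF assms(2)] assms(4-7) graph_vne[OF assms(1,3)]] .

lemma class_union:
  assumes "is_graph G" "partition_of P (\<Union>(fst G))" "\<And>v. v \<in> fst G \<Longrightarrow> \<exists>C\<in>P. v \<subseteq> C" "C \<in> P"
  shows "C = \<Union>{v \<in> fst G. v \<subseteq> C}"
proof
  show "\<Union>{v \<in> fst G. v \<subseteq> C} \<subseteq> C" by auto
  show "C \<subseteq> \<Union>{v \<in> fst G. v \<subseteq> C}"
  proof
    fix x assume x: "x \<in> C"
    then have "x \<in> \<Union>(fst G)" using partition_Un[OF assms(2)] assms(4) by auto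
    then obtain v where v: "v \<in> fst G" "x \<in> v" by auto
    obtain D where D: "D \<in> P" "v \<subseteq> D" using assms(3)[OF v(1)] by auto
    have "D = C" using partition_eq[OF assms(2) D(1) assms(4)] x v(2) D(2) by auto
    then show "x \<in> \<Union>{v \<in> fst G. v \<subseteq> C}" using v D by auto
  qed
qed

lemma adm_class_union:
  assumes "is_graph G" "admissible P G" "C \<in> P"
  shows "C = \<Union>{v \<in> fst G. v \<subseteq> C}"
  using class_union[OF assms(1) admD(1,2)[OF assms(2)] assms(3)] by blast

lemma adm_finite:
  assumes "is_graph G"
  shows "finite {P. admissible P G}"
proof -
  have "{P. admissible P G} \<subseteq> Pow (Pow (\<Union>(fst G)))"
  proof
    fix P assume "P \<in> {P. admissible P G}"
    then have "partition_of P (\<Union>(fst G))" using admD(1) by blast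
    then have "\<Union>P = \<Union>(fst G)" by (rule partition_Un)
    then show "P \<in> Pow (Pow (\<Union>(fst G)))" by auto
  qed
  then show ?thesis using is_graphD(1)[OF assms] by (meson finite_Pow_iff finite_subset)
qed

lemma conn_in_class:
  assumes g: "is_graph G" and Q: "partition_of Q (\<Union>(fst G))"
    and cov: "\<And>v. v \<in> fst G \<Longrightarrow> \<exists>D\<in>Q. v \<subseteq> D"
    and c: "connected_on E' W" and W: "W \<subseteq> fst G"
    and e: "\<And>x y. x \<in> W \<Longrightarrow> y \<in> W \<Longrightarrow> {x, y} \<in> E' \<Longrightarrow> \<exists>D\<in>Q. x \<subseteq> D \<and> y \<subseteq> D"
  shows "\<exists>D\<in>Q. \<Union>W \<subseteq> D"
proof -
  have "W \<noteq> {}" using c unfolding connected_on_def by simp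
  then obtain v where v: "v \<in> W" by blast
  have "v \<in> fst G" using v W by blast
  then obtain D where D: "D \<in> Q" "v \<subseteq> D" using cov by blast
  have "W \<subseteq> {u. u \<subseteq> D}"
  proof (rule conn_closed[OF c v])
    show "v \<in> {u. u \<subseteq> D}" using D by simp
    fix x y assume xy: "x \<in> W" "y \<in> W" "{x, y} \<in> E'" "x \<in> {u. u \<subseteq> D}"
    obtain D' where D': "D' \<in> Q" "x \<subseteq> D'" "y \<subseteq> D'" using e[OF xy(1-3)] by auto
    have "x \<noteq> {}" using graph_vne[OF g] xy(1) W by auto
    then have "D' = D" using partition_sub_eq[OF Q D'(1) D(1) D'(2)] xy(4) by auto
    then show "y \<in> {u. u \<subseteq> D}" using D' by simp
  qed
  then show ?thesis using D by auto
qed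

definition internal :: "nat set set \<Rightarrow> graph \<Rightarrow> bool" where
  "internal P G \<longleftrightarrow> (\<forall>e\<in>snd G. \<exists>C\<in>P. \<Union>e \<subseteq> C)"

lemma restr_fst[simp]: "fst (restr_graph G P) = fst G"
  unfolding restr_graph_def by simp

lemma quot_fst[simp]: "fst (quot_graph G P) = P"
  unfolding quot_graph_def by simp

lemma restr_snd_sub: "snd (restr_graph G P) \<subseteq> snd G"
  unfolding restr_graph_def by auto

lemma restr_snd: "snd (restr_graph G P) = {e \<in> snd G. \<exists>C\<in>P. \<Union>e \<subseteq> C}"
  unfolding restr_graph_def by simp

lemma internal_iff: "internal P G \<longleftrightarrow> snd (restr_graph G P) = snd G"
  unfolding internal_def restr_snd by blast

lemma internal_restr: "internal P G \<Longrightarrow> restr_graph G P = G"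
proof -
  assume "internal P G"
  then have "snd (restr_graph G P) = snd G" using internal_iff by blast
  then show ?thesis using restr_fst[of G P] by (simp add: prod_eq_iff)
qed

lemma internal_edge:
  assumes "internal R G" "{x, y} \<in> snd G"
  shows "\<exists>D\<in>R. x \<subseteq> D \<and> y \<subseteq> D"
proof -
  obtain D where "D \<in> R" "\<Union>{x, y} \<subseteq> D" using assms unfolding internal_def by blast
  then show ?thesis by auto
qed

lemma adm_internal_refines:
  assumes g: "is_graph G" and P: "admissible P G" and Q: "admissible Q G" "internal Q G"
    and C: "C \<in> P"
  shows "\<exists>D\<in>Q. C \<subseteq> D"
proof -
  have "\<exists>D\<in>Q. \<Union>{v \<in> fst G. v \<subseteq> C} \<subseteq> D"
  proof (rule conn_in_class[OF g admD(1,2)[OF Q(1)] admD(3)[OF P(1) C]])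
    show "{v \<in> fst G. v \<subseteq> C} \<subseteq> fst G" by blast
    fix x y assume "{x, y} \<in> snd G"
    then show "\<exists>D\<in>Q. x \<subseteq> D \<and> y \<subseteq> D" using internal_edge[OF Q(2)] by blast
  qed
  then obtain D where "D \<in> Q" "\<Union>{v \<in> fst G. v \<subseteq> C} \<subseteq> D" by blast
  moreover have "C = \<Union>{v \<in> fst G. v \<subseteq> C}" by (rule adm_class_union[OF g P C])
  ultimately show ?thesis by auto
qed

lemma adm_internal_unique:
  assumes g: "is_graph G" and P: "admissible P G" "internal P G"
    and Q: "admissible Q G" "internal Q G"
  shows "P \<subseteq> Q"
proof
  fix C assume C: "C \<in> P"
  obtain D where D: "D \<in> Q" "C \<subseteq> D" using adm_internal_refines[OF g P(1) Q C] by blast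
  obtain C' where C': "C' \<in> P" "D \<subseteq> C'" using adm_internal_refines[OF g Q(1) P D(1)] by blast
  have "C \<noteq> {}" using partition_ne[OF admD(1)[OF P(1)] C] .
  then have "C = C'" using partition_sub_eq[OF admD(1)[OF P(1)] C C'(1)] D(2) C'(2) by auto
  then have "C = D" using D(2) C'(2) by auto
  then show "C \<in> Q" using D by simp
qed


definition reach :: "graph \<Rightarrow> (nat set \<times> nat set) set" where
  "reach G = crel (snd G) (fst G)"

definition comp_of :: "graph \<Rightarrow> nat set \<Rightarrow> nat set" where
  "comp_of G v = \<Union>{w \<in> fst G. (v, w) \<in> (reach G)\<^sup>*}"

definition KK :: "graph \<Rightarrow> nat set set" where
  "KK G = comp_of G ` fst G"

lemma comp_sub: "v \<in> fst G \<Longrightarrow> v \<subseteq> comp_of G v"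
  unfolding comp_of_def by blast

lemma comp_sub_V: "comp_of G v \<subseteq> \<Union>(fst G)"
  unfolding comp_of_def by blast

lemma comp_eq:
  assumes "(v1, v2) \<in> (reach G)\<^sup>*"
  shows "comp_of G v1 = comp_of G v2"
proof -
  have "(v2, v1) \<in> (reach G)\<^sup>*" using assms crel_sym unfolding reach_def by blast
  then have "{w \<in> fst G. (v1, w) \<in> (reach G)\<^sup>*} = {w \<in> fst G. (v2, w) \<in> (reach G)\<^sup>*}"
    using assms by (meson rtrancl_trans)
  then show ?thesis unfolding comp_of_def by simp
qed

lemma comp_vertex:
  assumes g: "is_graph G" and u: "u \<in> fst G" "u \<subseteq> comp_of G v"
  shows "(v, u) \<in> (reach G)\<^sup>*"
proof -
  obtain x where x: "x \<in> u" using graph_vne[OF g u(1)] by blast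
  then have "x \<in> comp_of G v" using u(2) by blast
  then obtain w where w: "w \<in> fst G" "(v, w) \<in> (reach G)\<^sup>*" "x \<in> w" unfolding comp_of_def by blast
  have "u = w" using graph_veq[OF g u(1) w(1) x w(3)] .
  then show ?thesis using w by simp
qed

lemma comp_inter:
  assumes g: "is_graph G" and x: "x \<in> comp_of G v1" "x \<in> comp_of G v2"
  shows "comp_of G v1 = comp_of G v2"
proof -
  obtain w1 where w1: "w1 \<in> fst G" "(v1, w1) \<in> (reach G)\<^sup>*" "x \<in> w1" using x(1) unfolding comp_of_def by blast
  obtain w2 where w2: "w2 \<in> fst G" "(v2, w2) \<in> (reach G)\<^sup>*" "x \<in> w2" using x(2) unfolding comp_of_def by blast
  have "w1 = w2" using graph_veq[OF g w1(1) w2(1) w1(3) w2(3)] .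
  then show ?thesis using comp_eq[OF w1(2)] comp_eq[OF w2(2)] by simp
qed

lemma KK_partition:
  assumes g: "is_graph G"
  shows "partition_of (KK G) (\<Union>(fst G))"
  unfolding partition_of_def
proof (intro conjI ballI impI)
  fix B assume "B \<in> KK G"
  then obtain v where v: "v \<in> fst G" "B = comp_of G v" unfolding KK_def by blast
  then show "B \<noteq> {}" using comp_sub[OF v(1)] graph_vne[OF g v(1)] by blast
next
  fix B C assume B: "B \<in> KK G" and C: "C \<in> KK G" and ne: "B \<noteq> C"
  obtain v where v: "v \<in> fst G" "B = comp_of G v" using B unfolding KK_def by blast
  obtain w where w: "w \<in> fst G" "C = comp_of G w" using C unfolding KK_def by blast
  show "B \<inter> C = {}"
  proof (rule ccontr)
    assume "B \<inter> C \<noteq> {}"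
    then obtain x where "x \<in> B" "x \<in> C" by blast
    then show False using comp_inter[OF g, of x v w] v w ne by simp
  qed
next
  show "\<Union>(KK G) = \<Union>(fst G)"
  proof
    show "\<Union>(KK G) \<subseteq> \<Union>(fst G)" unfolding KK_def using comp_sub_V by blast
    show "\<Union>(fst G) \<subseteq> \<Union>(KK G)" unfolding KK_def using comp_sub by blast
  qed
qed

lemma KK_adm:
  assumes g: "is_graph G"
  shows "admissible (KK G) G"
  unfolding admissible_def
proof (intro conjI ballI)
  show "partition_of (KK G) (\<Union>(fst G))" by (rule KK_partition[OF g])
next
  fix v assume "v \<in> fst G"
  then show "\<exists>C\<in>KK G. v \<subseteq> C" unfolding KK_def using comp_sub by blast
next
  fix C assume "C \<in> KK G"
  then obtain v where v: "v \<in> fst G" "C = comp_of G v" unfolding KK_def by blast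
  define W where "W = {u \<in> fst G. u \<subseteq> C}"
  have vW: "v \<in> W" unfolding W_def using v comp_sub by blast
  have path: "(v, u) \<in> (crel (snd G) W)\<^sup>*" if "(v, u) \<in> (reach G)\<^sup>*" for u
    using that
  proof (induction rule: rtrancl_induct)
    case base then show ?case by simp
  next
    case (step y z)
    have yz: "y \<in> fst G" "z \<in> fst G" "{y, z} \<in> snd G" using step(2) unfolding reach_def crel_def by auto
    have "(v, z) \<in> (reach G)\<^sup>*" using step(1,2) by simp
    then have "z \<subseteq> C" using v(2) comp_sub[OF yz(2)] comp_eq[of v z G] by simp
    moreover have "y \<subseteq> C" using v(2) comp_sub[OF yz(1)] comp_eq[OF step(1)] by simp
    ultimately have "(y, z) \<in> crel (snd G) W" unfolding crel_def W_def using yz by simp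
    then show ?case using step(3) by simp
  qed
  have inW: "(v, u) \<in> (crel (snd G) W)\<^sup>*" if "u \<in> W" for u
    using path comp_vertex[OF g] that v(2) unfolding W_def by blast
  show "connected_on (snd G) {v \<in> fst G. v \<subseteq> C}"
    unfolding connected_on_alt W_def[symmetric]
  proof (intro conjI ballI)
    show "W \<noteq> {}" using vW by blast
    fix a b assume "a \<in> W" "b \<in> W"
    then show "(a, b) \<in> (crel (snd G) W)\<^sup>*" using inW crel_sym by (meson rtrancl_trans)
  qed
qed

lemma KK_internal:
  assumes g: "is_graph G"
  shows "internal (KK G) G"
  unfolding internal_def
proof
  fix e assume e: "e \<in> snd G"
  obtain x y where xy: "x \<in> fst G" "y \<in> fst G" "x \<noteq> y" "e = {x, y}" using is_graphD(3)[OF g e] by blast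
  have "(x, y) \<in> reach G" unfolding reach_def crel_def using xy e by simp
  then have "comp_of G y = comp_of G x" using comp_eq[of x y G] by (simp add: r_into_rtrancl)
  then have "\<Union>e \<subseteq> comp_of G x" using comp_sub[OF xy(1)] comp_sub[OF xy(2)] xy(4) by auto
  then show "\<exists>C\<in>KK G. \<Union>e \<subseteq> C" unfolding KK_def using xy(1) by blast
qed

lemma adm_internal_iff:
  assumes g: "is_graph G" and P: "admissible P G"
  shows "internal P G \<longleftrightarrow> P = KK G"
proof
  assume "internal P G"
  then show "P = KK G" using adm_internal_unique[OF g P _ KK_adm[OF g] KK_internal[OF g]]
      adm_internal_unique[OF g KK_adm[OF g] KK_internal[OF g] P] by blast
next
  assume "P = KK G" then show "internal P G" using KK_internal[OF g] by simp
qed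

lemma quot_snd: "snd (quot_graph G P) = {{C, D} | C D. C \<in> P \<and> D \<in> P \<and> C \<noteq> D \<and>
       (\<exists>v w. {v, w} \<in> snd G \<and> v \<subseteq> C \<and> w \<subseteq> D)}"
  unfolding quot_graph_def by simp

lemma quot_snd_empty:
  assumes g: "is_graph G" and P: "admissible P G"
  shows "snd (quot_graph G P) = {} \<longleftrightarrow> internal P G"
proof
  assume i: "internal P G"
  show "snd (quot_graph G P) = {}"
  proof (rule ccontr)
    assume "snd (quot_graph G P) \<noteq> {}"
    then obtain C D v w where c: "C \<in> P" "D \<in> P" "C \<noteq> D" "{v, w} \<in> snd G" "v \<subseteq> C" "w \<subseteq> D"
      unfolding quot_snd by blast
    obtain D' where D': "D' \<in> P" "v \<subseteq> D'" "w \<subseteq> D'" using internal_edge[OF i c(4)] by blast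
    have vw: "v \<in> fst G" "w \<in> fst G" using graph_edge_in[OF g c(4)] by auto
    have "C = D'" using adm_cls_unique[OF g P vw(1) c(1) D'(1) c(5) D'(2)] .
    moreover have "D = D'" using adm_cls_unique[OF g P vw(2) c(2) D'(1) c(6) D'(3)] .
    ultimately show False using c(3) by simp
  qed
next
  assume e: "snd (quot_graph G P) = {}"
  show "internal P G" unfolding internal_def
  proof
    fix e assume eE: "e \<in> snd G"
    obtain x y where xy: "x \<in> fst G" "y \<in> fst G" "x \<noteq> y" "e = {x, y}" using is_graphD(3)[OF g eE] by blast
    obtain C where C: "C \<in> P" "x \<subseteq> C" using admD(2)[OF P xy(1)] by blast
    obtain D where D: "D \<in> P" "y \<subseteq> D" using admD(2)[OF P xy(2)] by blast
    show "\<exists>C\<in>P. \<Union>e \<subseteq> C"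
    proof (cases "C = D")
      case True then show ?thesis using C D xy(4) by auto
    next
      case False
      then have "{C, D} \<in> snd (quot_graph G P)" unfolding quot_snd using C D eE xy(4) by blast
      then show ?thesis using e by simp
    qed
  qed
qed

lemma V_adm:
  assumes g: "is_graph G"
  shows "admissible (fst G) G"
  unfolding admissible_def
proof (intro conjI ballI)
  show "partition_of (fst G) (\<Union>(fst G))" by (rule is_graphD(2)[OF g])
  fix v assume "v \<in> fst G" then show "\<exists>C\<in>fst G. v \<subseteq> C" by blast
next
  fix C assume C: "C \<in> fst G"
  have "{v \<in> fst G. v \<subseteq> C} = {C}" using graph_vsub[OF g _ C] C by blast
  then show "connected_on (snd G) {v \<in> fst G. v \<subseteq> C}" unfolding connected_on_def by simp
qed

lemma V_restr_empty:
  assumes g: "is_graph G"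
  shows "snd (restr_graph G (fst G)) = {}"
proof (rule ccontr)
  assume "snd (restr_graph G (fst G)) \<noteq> {}"
  then obtain e C where e: "e \<in> snd G" "C \<in> fst G" "\<Union>e \<subseteq> C" unfolding restr_snd by blast
  obtain x y where xy: "x \<in> fst G" "y \<in> fst G" "x \<noteq> y" "e = {x, y}" using is_graphD(3)[OF g e(1)] by blast
  have "x = C" using graph_vsub[OF g xy(1) e(2)] e(3) xy(4) by auto
  moreover have "y = C" using graph_vsub[OF g xy(2) e(2)] e(3) xy(4) by auto
  ultimately show False using xy(3) by simp
qed

lemma adm_noedge_unique:
  assumes g: "is_graph G" and P: "admissible P G" and e: "snd (restr_graph G P) = {}"
  shows "P = fst G"
proof -
  have sub: "\<exists>v\<in>fst G. C = v" if C: "C \<in> P" for C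
  proof -
    have "\<exists>D\<in>fst G. \<Union>{v \<in> fst G. v \<subseteq> C} \<subseteq> D"
    proof (rule conn_in_class[OF g is_graphD(2)[OF g] _ admD(3)[OF P C]])
      show "\<And>v. v \<in> fst G \<Longrightarrow> \<exists>D\<in>fst G. v \<subseteq> D" by blast
      show "{v \<in> fst G. v \<subseteq> C} \<subseteq> fst G" by blast
      fix x y assume xy: "x \<in> {v \<in> fst G. v \<subseteq> C}" "y \<in> {v \<in> fst G. v \<subseteq> C}" "{x, y} \<in> snd G"
      then have "{x, y} \<in> snd (restr_graph G P)" unfolding restr_snd using C by auto
      then show "\<exists>D\<in>fst G. x \<subseteq> D \<and> y \<subseteq> D" using e by simp
    qed
    then obtain D where D: "D \<in> fst G" "\<Union>{v \<in> fst G. v \<subseteq> C} \<subseteq> D" by blast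
    have CD: "C \<subseteq> D" using D(2) adm_class_union[OF g P C] by auto
    have "{v \<in> fst G. v \<subseteq> C} \<noteq> {}" using admD(3)[OF P C] unfolding connected_on_def by simp
    then obtain u where u: "u \<in> fst G" "u \<subseteq> C" by blast
    have "u = D" using graph_vsub[OF g u(1) D(1)] u(2) CD by auto
    then have "C = D" using CD u(2) by auto
    then show ?thesis using D(1) by blast
  qed
  show ?thesis
  proof
    show "P \<subseteq> fst G" using sub by blast
    show "fst G \<subseteq> P"
    proof
      fix v assume v: "v \<in> fst G"
      obtain C where C: "C \<in> P" "v \<subseteq> C" using admD(2)[OF P v] by blast
      obtain w where w: "w \<in> fst G" "C = w" using sub[OF C(1)] by blast
      have "v = w" using graph_vsub[OF g v w(1)] C(2) w(2) by simp
      then show "v \<in> P" using C w by simp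
    qed
  qed
qed

lemma quot_V:
  assumes g: "is_graph G"
  shows "quot_graph G (fst G) = G"
proof -
  have "snd (quot_graph G (fst G)) = snd G"
  proof
    show "snd (quot_graph G (fst G)) \<subseteq> snd G"
    proof
      fix e assume "e \<in> snd (quot_graph G (fst G))"
      then obtain C D v w where c: "e = {C, D}" "C \<in> fst G" "D \<in> fst G" "{v, w} \<in> snd G" "v \<subseteq> C" "w \<subseteq> D"
        unfolding quot_snd by blast
      have vw: "v \<in> fst G" "w \<in> fst G" using graph_edge_in[OF g c(4)] by auto
      have "v = C" using graph_vsub[OF g vw(1) c(2) c(5)] .
      moreover have "w = D" using graph_vsub[OF g vw(2) c(3) c(6)] .
      ultimately show "e \<in> snd G" using c by simp
    qed
  next
    show "snd G \<subseteq> snd (quot_graph G (fst G))"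
    proof
      fix e assume e: "e \<in> snd G"
      obtain x y where xy: "x \<in> fst G" "y \<in> fst G" "x \<noteq> y" "e = {x, y}" using is_graphD(3)[OF g e] by blast
      show "e \<in> snd (quot_graph G (fst G))" unfolding quot_snd using xy e by blast
    qed
  qed
  then show ?thesis by (simp add: prod_eq_iff)
qed

lemma sum_single:
  assumes "finite S" "x \<in> S" "\<And>y. y \<in> S \<Longrightarrow> y \<noteq> x \<Longrightarrow> g y = 0"
  shows "sum g S = g x"
proof -
  have "sum g S = g x + sum g (S - {x})" using sum.remove[OF assms(1,2)] .
  moreover have "sum g (S - {x}) = 0" using assms(3) by (intro sum.neutral) blast
  ultimately show ?thesis by simp
qed

lemma unit_right:
  fixes f :: "graph \<Rightarrow> 'k::field"
  assumes g: "is_graph G"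
  shows "char_prod f eps' G = f G"
proof -
  have "char_prod f eps' G = f (quot_graph G (fst G)) * eps' (restr_graph G (fst G))"
    unfolding char_prod_def
  proof (rule sum_single[OF adm_finite[OF g]])
    show "fst G \<in> {P. admissible P G}" using V_adm[OF g] by simp
    fix P assume P: "P \<in> {P. admissible P G}" "P \<noteq> fst G"
    then have "snd (restr_graph G P) \<noteq> {}" using adm_noedge_unique[OF g] by blast
    then show "f (quot_graph G P) * eps' (restr_graph G P) = 0" unfolding eps'_def by simp
  qed
  then show ?thesis using quot_V[OF g] V_restr_empty[OF g] unfolding eps'_def by simp
qed

lemma unit_left:
  fixes f :: "graph \<Rightarrow> 'k::field"
  assumes g: "is_graph G"
  shows "char_prod eps' f G = f G"
proof -
  have "char_prod eps' f G = eps' (quot_graph G (KK G)) * f (restr_graph G (KK G))"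
    unfolding char_prod_def
  proof (rule sum_single[OF adm_finite[OF g]])
    show "KK G \<in> {P. admissible P G}" using KK_adm[OF g] by simp
    fix P assume P: "P \<in> {P. admissible P G}" "P \<noteq> KK G"
    then have "snd (quot_graph G P) \<noteq> {}" using quot_snd_empty[OF g] adm_internal_iff[OF g] by blast
    then show "eps' (quot_graph G P) * f (restr_graph G P) = 0" unfolding eps'_def by simp
  qed
  moreover have "snd (quot_graph G (KK G)) = {}" using quot_snd_empty[OF g KK_adm[OF g]] KK_internal[OF g] by simp
  moreover have "restr_graph G (KK G) = G" using internal_restr KK_internal[OF g] by blast
  ultimately show ?thesis unfolding eps'_def by simp
qed


lemma is_graph_quot:
  assumes g: "is_graph G" and P: "partition_of P (\<Union>(fst G))"
  shows "is_graph (quot_graph G P)"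
proof -
  have U: "\<Union>P = \<Union>(fst G)" using partition_Un[OF P] .
  show ?thesis unfolding is_graph_def quot_fst
  proof (intro conjI ballI)
    show "finite (\<Union>P)" using U is_graphD(1)[OF g] by simp
    show "partition_of P (\<Union>P)" using P U by simp
    fix e assume "e \<in> snd (quot_graph G P)"
    then show "\<exists>v w. v \<in> P \<and> w \<in> P \<and> v \<noteq> w \<and> e = {v, w}" unfolding quot_snd by blast
  qed
qed

lemma is_graph_restr:
  assumes g: "is_graph G"
  shows "is_graph (restr_graph G P)"
  unfolding is_graph_def restr_fst
proof (intro conjI ballI)
  show "finite (\<Union>(fst G))" using is_graphD(1)[OF g] .
  show "partition_of (fst G) (\<Union>(fst G))" using is_graphD(2)[OF g] .
  fix e assume "e \<in> snd (restr_graph G P)"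
  then have "e \<in> snd G" using restr_snd_sub by blast
  then show "\<exists>v w. v \<in> fst G \<and> w \<in> fst G \<and> v \<noteq> w \<and> e = {v, w}" using is_graphD(3)[OF g] by blast
qed

lemma crel_mono: "W \<subseteq> W' \<Longrightarrow> (a, b) \<in> (crel E W)\<^sup>* \<Longrightarrow> (a, b) \<in> (crel E W')\<^sup>*"
proof -
  assume "W \<subseteq> W'" "(a, b) \<in> (crel E W)\<^sup>*"
  moreover have "crel E W \<subseteq> crel E W'" using \<open>W \<subseteq> W'\<close> unfolding crel_def by auto
  ultimately show ?thesis using rtrancl_mono by blast
qed

lemma conn_path: "connected_on E W \<Longrightarrow> a \<in> W \<Longrightarrow> b \<in> W \<Longrightarrow> (a, b) \<in> (crel E W)\<^sup>*"
  unfolding connected_on_alt by blast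

lemma quot_edge_cases:
  assumes "{C1, C2} \<in> snd (quot_graph G P)"
  shows "\<exists>x y. {x, y} \<in> snd G \<and> x \<subseteq> C1 \<and> y \<subseteq> C2"
proof -
  have "\<exists>C D. {C1, C2} = {C, D} \<and> C \<in> P \<and> D \<in> P \<and> C \<noteq> D \<and> (\<exists>v w. {v, w} \<in> snd G \<and> v \<subseteq> C \<and> w \<subseteq> D)"
    using assms unfolding quot_snd by (simp only: mem_Collect_eq)
  then obtain C D v w where c: "{C1, C2} = {C, D}" "{v, w} \<in> snd G" "v \<subseteq> C" "w \<subseteq> D"
    by (elim exE conjE) (rule that)
  have d: "C1 = C \<and> C2 = D \<or> C1 = D \<and> C2 = C" using c(1) unfolding doubleton_eq_iff .
  have "{w, v} \<in> snd G" using c(2) by (simp add: insert_commute)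
  then show ?thesis using c(2-4) d by blast
qed

lemma refine_sub:
  assumes g: "is_graph G" and P: "admissible P G" and Q: "partition_of Q (\<Union>(fst G))"
    and ref: "\<And>C. C \<in> P \<Longrightarrow> \<exists>D\<in>Q. C \<subseteq> D"
    and v: "v \<in> fst G" "v \<subseteq> C" "C \<in> P" "v \<subseteq> D" "D \<in> Q"
  shows "C \<subseteq> D"
proof -
  obtain D' where D': "D' \<in> Q" "C \<subseteq> D'" using ref[OF v(3)] by blast
  have "D' = D" using partition_sub_eq[OF Q D'(1) v(5) _ v(4) graph_vne[OF g v(1)]] v(2) D'(2) by auto
  then show ?thesis using D' by simp
qed

lemma assoc_adm1:
  assumes g: "is_graph G" and P: "admissible P G" and Q: "admissible Q (quot_graph G P)"
  shows "admissible Q G" "admissible P (restr_graph G Q)"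
proof -
  have UP: "\<Union>P = \<Union>(fst G)" using partition_Un[OF admD(1)[OF P]] .
  have Qp: "partition_of Q (\<Union>(fst G))" using admD(1)[OF Q] UP by simp
  have ref: "\<exists>D\<in>Q. C \<subseteq> D" if "C \<in> P" for C using admD(2)[OF Q] that by simp
  have Qc: "connected_on (snd (quot_graph G P)) {C \<in> P. C \<subseteq> D}" if "D \<in> Q" for D
    using admD(3)[OF Q that] by simp
  show "admissible Q G" unfolding admissible_def
  proof (intro conjI ballI)
    show "partition_of Q (\<Union>(fst G))" by (rule Qp)
    fix v assume v: "v \<in> fst G"
    obtain C where C: "C \<in> P" "v \<subseteq> C" using admD(2)[OF P v] by blast
    obtain D where "D \<in> Q" "C \<subseteq> D" using ref[OF C(1)] by blast
    then show "\<exists>C\<in>Q. v \<subseteq> C" using C by blast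
  next
    fix D assume D: "D \<in> Q"
    define W where "W = {v \<in> fst G. v \<subseteq> D}"
    define W' where "W' = {C \<in> P. C \<subseteq> D}"
    have cW': "connected_on (snd (quot_graph G P)) W'" using Qc[OF D] unfolding W'_def .
    have WC_sub: "{v \<in> fst G. v \<subseteq> C} \<subseteq> W" if "C \<in> W'" for C using that unfolding W_def W'_def by auto
    have main: "(a, u) \<in> (crel (snd G) W)\<^sup>*" if a: "a \<in> fst G" "a \<subseteq> Ca" "Ca \<in> W'"
        and p: "(Ca, C') \<in> (crel (snd (quot_graph G P)) W')\<^sup>*" and u: "u \<in> fst G" "u \<subseteq> C'" for a Ca C' u
      using p u
    proof (induction arbitrary: u rule: rtrancl_induct)
      case base
      have "Ca \<in> P" using a(3) unfolding W'_def by simp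
      then have "(a, u) \<in> (crel (snd G) {v \<in> fst G. v \<subseteq> Ca})\<^sup>*"
        using conn_path[OF admD(3)[OF P]] a(1,2) base by blast
      then show ?case using crel_mono[OF WC_sub[OF a(3)]] by blast
    next
      case (step C1 C2)
      have c12: "C1 \<in> W'" "C2 \<in> W'" "{C1, C2} \<in> snd (quot_graph G P)" using step(2) unfolding crel_def by auto
      obtain x y where xy: "{x, y} \<in> snd G" "x \<subseteq> C1" "y \<subseteq> C2" using quot_edge_cases[OF c12(3)] by blast
      have xyV: "x \<in> fst G" "y \<in> fst G" using graph_edge_in[OF g xy(1)] by auto
      have ax: "(a, x) \<in> (crel (snd G) W)\<^sup>*" using step(3)[OF xyV(1) xy(2)] .
      have "(x, y) \<in> crel (snd G) W" unfolding crel_def W_def using xy xyV c12 unfolding W'_def by auto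
      moreover have "(y, u) \<in> (crel (snd G) W)\<^sup>*"
      proof -
        have "C2 \<in> P" using c12(2) unfolding W'_def by simp
        then have "(y, u) \<in> (crel (snd G) {v \<in> fst G. v \<subseteq> C2})\<^sup>*"
          using conn_path[OF admD(3)[OF P]] xyV(2) xy(3) step(4,5) by blast
        then show ?thesis using crel_mono[OF WC_sub[OF c12(2)]] by blast
      qed
      ultimately show ?case using ax by (meson rtrancl_trans r_into_rtrancl)
    qed
    have inW': "\<exists>Ca. Ca \<in> W' \<and> a \<subseteq> Ca" if "a \<in> W" for a
    proof -
      have a: "a \<in> fst G" "a \<subseteq> D" using that unfolding W_def by auto
      obtain Ca where Ca: "Ca \<in> P" "a \<subseteq> Ca" using admD(2)[OF P a(1)] by blast
      have "Ca \<subseteq> D" using refine_sub[OF g P Qp ref a(1) Ca(2) Ca(1) a(2) D] .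
      then show ?thesis using Ca unfolding W'_def by blast
    qed
    show "connected_on (snd G) {v \<in> fst G. v \<subseteq> D}"
      unfolding connected_on_alt W_def[symmetric]
    proof (intro conjI ballI)
      have "W' \<noteq> {}" using cW' unfolding connected_on_def by simp
      then obtain C where C: "C \<in> W'" by blast
      then have "{v \<in> fst G. v \<subseteq> C} \<noteq> {}" using admD(3)[OF P] unfolding W'_def connected_on_def by auto
      then show "W \<noteq> {}" using WC_sub[OF C] by blast
    next
      fix a b assume ab: "a \<in> W" "b \<in> W"
      obtain Ca where Ca: "Ca \<in> W'" "a \<subseteq> Ca" using inW'[OF ab(1)] by blast
      obtain Cb where Cb: "Cb \<in> W'" "b \<subseteq> Cb" using inW'[OF ab(2)] by blast
      have p: "(Ca, Cb) \<in> (crel (snd (quot_graph G P)) W')\<^sup>*" using conn_path[OF cW' Ca(1) Cb(1)] .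
      have abV: "a \<in> fst G" "b \<in> fst G" using ab unfolding W_def by auto
      show "(a, b) \<in> (crel (snd G) W)\<^sup>*" using main[OF abV(1) Ca(2) Ca(1) p abV(2) Cb(2)] .
    qed
  qed
  show "admissible P (restr_graph G Q)" unfolding admissible_def restr_fst
  proof (intro conjI ballI)
    show "partition_of P (\<Union>(fst G))" using admD(1)[OF P] .
    fix v assume "v \<in> fst G" then show "\<exists>C\<in>P. v \<subseteq> C" using admD(2)[OF P] by blast
  next
    fix C assume C: "C \<in> P"
    obtain D where D: "D \<in> Q" "C \<subseteq> D" using ref[OF C] by blast
    show "connected_on (snd (restr_graph G Q)) {v \<in> fst G. v \<subseteq> C}"
    proof (rule connected_on_mono[OF admD(3)[OF P C]])
      fix x y assume "x \<in> {v \<in> fst G. v \<subseteq> C}" "y \<in> {v \<in> fst G. v \<subseteq> C}" "{x, y} \<in> snd G"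
      then show "{x, y} \<in> snd (restr_graph G Q)" unfolding restr_snd using D by auto
    qed
  qed
qed

lemma assoc_refine:
  assumes g: "is_graph G" and Q: "admissible Q G" and P: "admissible P (restr_graph G Q)"
  shows "admissible P G" "\<And>C. C \<in> P \<Longrightarrow> \<exists>D\<in>Q. C \<subseteq> D"
proof -
  show PG: "admissible P G" unfolding admissible_def
  proof (intro conjI ballI)
    show "partition_of P (\<Union>(fst G))" using admD(1)[OF P] by simp
    fix v assume "v \<in> fst G" then show "\<exists>C\<in>P. v \<subseteq> C" using admD(2)[OF P] by simp
  next
    fix C assume C: "C \<in> P"
    show "connected_on (snd G) {v \<in> fst G. v \<subseteq> C}"
    proof -
      have "connected_on (snd (restr_graph G Q)) {v \<in> fst G. v \<subseteq> C}" using admD(3)[OF P C] by simp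
      then show ?thesis by (rule connected_on_mono) (use restr_snd_sub in blast)
    qed
  qed
  fix C assume C: "C \<in> P"
  have "\<exists>D\<in>Q. \<Union>{v \<in> fst G. v \<subseteq> C} \<subseteq> D"
  proof (rule conn_in_class[OF g admD(1,2)[OF Q]])
    show "connected_on (snd (restr_graph G Q)) {v \<in> fst G. v \<subseteq> C}" using admD(3)[OF P C] by simp
    show "{v \<in> fst G. v \<subseteq> C} \<subseteq> fst G" by blast
    fix x y assume "{x, y} \<in> snd (restr_graph G Q)"
    then obtain D where "D \<in> Q" "\<Union>{x, y} \<subseteq> D" unfolding restr_snd by blast
    then show "\<exists>D\<in>Q. x \<subseteq> D \<and> y \<subseteq> D" by auto
  qed
  then show "\<exists>D\<in>Q. C \<subseteq> D" using adm_class_union[OF g PG C] by auto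
qed

lemma assoc_adm2:
  assumes g: "is_graph G" and Q: "admissible Q G" and P: "admissible P (restr_graph G Q)"
  shows "admissible Q (quot_graph G P)"
proof -
  have PG: "admissible P G" and ref: "\<And>C. C \<in> P \<Longrightarrow> \<exists>D\<in>Q. C \<subseteq> D"
    using assoc_refine[OF g Q P] by auto
  have UP: "\<Union>P = \<Union>(fst G)" using partition_Un[OF admD(1)[OF PG]] .
  have Qp: "partition_of Q (\<Union>(fst G))" using admD(1)[OF Q] .
  define cls where "cls u = (SOME C. C \<in> P \<and> u \<subseteq> C)" for u
  have cls: "cls u \<in> P" "u \<subseteq> cls u" if "u \<in> fst G" for u
  proof -
    have "\<exists>C. C \<in> P \<and> u \<subseteq> C" using admD(2)[OF PG that] by blast
    then have "cls u \<in> P \<and> u \<subseteq> cls u" unfolding cls_def by (rule someI_ex)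
    then show "cls u \<in> P" "u \<subseteq> cls u" by auto
  qed
  show ?thesis unfolding admissible_def quot_fst
  proof (intro conjI ballI)
    show "partition_of Q (\<Union>P)" using Qp UP by simp
    fix C assume "C \<in> P" then show "\<exists>D\<in>Q. C \<subseteq> D" using ref by blast
  next
    fix D assume D: "D \<in> Q"
    define W where "W = {v \<in> fst G. v \<subseteq> D}"
    define W' where "W' = {C \<in> P. C \<subseteq> D}"
    have clsW: "cls u \<in> W'" if "u \<in> W" for u
    proof -
      have u: "u \<in> fst G" "u \<subseteq> D" using that unfolding W_def by auto
      have "cls u \<subseteq> D" using refine_sub[OF g PG Qp ref u(1) cls(2)[OF u(1)] cls(1)[OF u(1)] u(2) D] .
      then show ?thesis unfolding W'_def using cls(1)[OF u(1)] by simp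
    qed
    have step: "(cls x, cls y) \<in> (crel (snd (quot_graph G P)) W')\<^sup>*" if "(x, y) \<in> crel (snd G) W" for x y
    proof -
      have xy: "x \<in> W" "y \<in> W" "{x, y} \<in> snd G" using that unfolding crel_def by auto
      have xyV: "x \<in> fst G" "y \<in> fst G" using xy unfolding W_def by auto
      show ?thesis
      proof (cases "cls x = cls y")
        case True then show ?thesis by simp
      next
        case False
        then have "{cls x, cls y} \<in> snd (quot_graph G P)" unfolding quot_snd
          using cls[OF xyV(1)] cls[OF xyV(2)] xy(3) by blast
        then have "(cls x, cls y) \<in> crel (snd (quot_graph G P)) W'" unfolding crel_def
          using clsW xy by simp
        then show ?thesis by blast
      qed
    qed
    have clsC: "cls u = C" if "u \<in> fst G" "u \<subseteq> C" "C \<in> P" for u C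
      using adm_cls_unique[OF g PG that(1) cls(1)[OF that(1)] that(3) cls(2)[OF that(1)] that(2)] .
    have cW: "connected_on (snd G) W" using admD(3)[OF Q D] unfolding W_def .
    show "connected_on (snd (quot_graph G P)) {C \<in> P. C \<subseteq> D}"
      unfolding connected_on_alt W'_def[symmetric]
    proof (intro conjI ballI)
      have "W \<noteq> {}" using cW unfolding connected_on_def by simp
      then show "W' \<noteq> {}" using clsW by blast
    next
      fix C1 C2 assume C: "C1 \<in> W'" "C2 \<in> W'"
      have "{v \<in> fst G. v \<subseteq> C1} \<noteq> {}" using admD(3)[OF PG] C(1) unfolding W'_def connected_on_def by auto
      then obtain v1 where v1: "v1 \<in> fst G" "v1 \<subseteq> C1" by blast
      have "{v \<in> fst G. v \<subseteq> C2} \<noteq> {}" using admD(3)[OF PG] C(2) unfolding W'_def connected_on_def by auto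
      then obtain v2 where v2: "v2 \<in> fst G" "v2 \<subseteq> C2" by blast
      have "v1 \<in> W" "v2 \<in> W" using v1 v2 C unfolding W_def W'_def by auto
      then have "(v1, v2) \<in> (crel (snd G) W)\<^sup>*" using cW unfolding connected_on_alt by blast
      then have "(cls v1, cls v2) \<in> (crel (snd (quot_graph G P)) W')\<^sup>*" by (rule rtrancl_hom) (rule step)
      moreover have "cls v1 = C1" "cls v2 = C2" using clsC v1 v2 C unfolding W'_def by auto
      ultimately show "(C1, C2) \<in> (crel (snd (quot_graph G P)) W')\<^sup>*" by simp
    qed
  qed
qed


lemma quot_mem:
  "e \<in> snd (quot_graph G P) \<longleftrightarrow> (\<exists>C D. e = {C, D} \<and> C \<in> P \<and> D \<in> P \<and> C \<noteq> D \<and>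
       (\<exists>v w. {v, w} \<in> snd G \<and> v \<subseteq> C \<and> w \<subseteq> D))"
  unfolding quot_snd by (simp only: mem_Collect_eq)

lemma quot_memE:
  assumes "e \<in> snd (quot_graph G P)"
  obtains C D v w where "e = {C, D}" "C \<in> P" "D \<in> P" "C \<noteq> D" "{v, w} \<in> snd G" "v \<subseteq> C" "w \<subseteq> D"
  using assms unfolding quot_mem by (elim exE conjE) (rule that)

lemma quot_memI:
  assumes "C \<in> P" "D \<in> P" "C \<noteq> D" "{v, w} \<in> snd G" "v \<subseteq> C" "w \<subseteq> D"
  shows "{C, D} \<in> snd (quot_graph G P)"
  unfolding quot_mem
  apply (rule exI[where x=C], rule exI[where x=D])
  using assms by blast

lemma quot_quot:
  assumes g: "is_graph G" and P: "admissible P G" and Qp: "partition_of Q (\<Union>(fst G))"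
    and ref: "\<And>C. C \<in> P \<Longrightarrow> \<exists>D\<in>Q. C \<subseteq> D"
  shows "quot_graph (quot_graph G P) Q = quot_graph G Q"
proof -
  have key: "(\<exists>v w. {v, w} \<in> snd (quot_graph G P) \<and> v \<subseteq> D1 \<and> w \<subseteq> D2) \<longleftrightarrow>
             (\<exists>v w. {v, w} \<in> snd G \<and> v \<subseteq> D1 \<and> w \<subseteq> D2)"
    if D: "D1 \<in> Q" "D2 \<in> Q" "D1 \<noteq> D2" for D1 D2
  proof
    assume "\<exists>v w. {v, w} \<in> snd (quot_graph G P) \<and> v \<subseteq> D1 \<and> w \<subseteq> D2"
    then obtain C1 C2 where c: "{C1, C2} \<in> snd (quot_graph G P)" "C1 \<subseteq> D1" "C2 \<subseteq> D2" by blast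
    obtain x y where "{x, y} \<in> snd G" "x \<subseteq> C1" "y \<subseteq> C2" using quot_edge_cases[OF c(1)] by blast
    then show "\<exists>v w. {v, w} \<in> snd G \<and> v \<subseteq> D1 \<and> w \<subseteq> D2" using c(2,3) by blast
  next
    assume "\<exists>v w. {v, w} \<in> snd G \<and> v \<subseteq> D1 \<and> w \<subseteq> D2"
    then obtain v w where vw: "{v, w} \<in> snd G" "v \<subseteq> D1" "w \<subseteq> D2" by blast
    have vwV: "v \<in> fst G" "w \<in> fst G" using graph_edge_in[OF g vw(1)] by auto
    obtain Cv where Cv: "Cv \<in> P" "v \<subseteq> Cv" using admD(2)[OF P vwV(1)] by blast
    obtain Cw where Cw: "Cw \<in> P" "w \<subseteq> Cw" using admD(2)[OF P vwV(2)] by blast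
    have s1: "Cv \<subseteq> D1" using refine_sub[OF g P Qp ref vwV(1) Cv(2) Cv(1) vw(2) D(1)] .
    have s2: "Cw \<subseteq> D2" using refine_sub[OF g P Qp ref vwV(2) Cw(2) Cw(1) vw(3) D(2)] .
    have "Cv \<noteq> Cw"
    proof
      assume "Cv = Cw"
      then have "D1 = D2" using partition_sub_eq[OF Qp D(1) D(2) s1 _ partition_ne[OF admD(1)[OF P] Cv(1)]] s2 by simp
      then show False using D(3) by simp
    qed
    then have "{Cv, Cw} \<in> snd (quot_graph G P)" using quot_memI[OF Cv(1) Cw(1) _ vw(1) Cv(2) Cw(2)] by simp
    then show "\<exists>v w. {v, w} \<in> snd (quot_graph G P) \<and> v \<subseteq> D1 \<and> w \<subseteq> D2" using s1 s2 by blast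
  qed
  have "snd (quot_graph (quot_graph G P) Q) = snd (quot_graph G Q)"
  proof
    show "snd (quot_graph (quot_graph G P) Q) \<subseteq> snd (quot_graph G Q)"
    proof
      fix e assume "e \<in> snd (quot_graph (quot_graph G P) Q)"
      then obtain D1 D2 v w where c: "e = {D1, D2}" "D1 \<in> Q" "D2 \<in> Q" "D1 \<noteq> D2"
        "{v, w} \<in> snd (quot_graph G P)" "v \<subseteq> D1" "w \<subseteq> D2" by (rule quot_memE)
      have "\<exists>v w. {v, w} \<in> snd (quot_graph G P) \<and> v \<subseteq> D1 \<and> w \<subseteq> D2" using c(5-7) by blast
      then obtain x y where "{x, y} \<in> snd G" "x \<subseteq> D1" "y \<subseteq> D2" using key[OF c(2-4)] by blast
      then show "e \<in> snd (quot_graph G Q)" using quot_memI[OF c(2-4)] c(1) by blast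
    qed
    show "snd (quot_graph G Q) \<subseteq> snd (quot_graph (quot_graph G P) Q)"
    proof
      fix e assume "e \<in> snd (quot_graph G Q)"
      then obtain D1 D2 v w where c: "e = {D1, D2}" "D1 \<in> Q" "D2 \<in> Q" "D1 \<noteq> D2"
        "{v, w} \<in> snd G" "v \<subseteq> D1" "w \<subseteq> D2" by (rule quot_memE)
      have "\<exists>v w. {v, w} \<in> snd G \<and> v \<subseteq> D1 \<and> w \<subseteq> D2" using c(5-7) by blast
      then obtain x y where "{x, y} \<in> snd (quot_graph G P)" "x \<subseteq> D1" "y \<subseteq> D2" using key[OF c(2-4)] by blast
      then show "e \<in> snd (quot_graph (quot_graph G P) Q)" using quot_memI[OF c(2-4)] c(1) by blast
    qed
  qed
  then show ?thesis by (simp add: prod_eq_iff)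
qed

lemma restr_mem: "e \<in> snd (restr_graph G P) \<longleftrightarrow> e \<in> snd G \<and> (\<exists>C\<in>P. \<Union>e \<subseteq> C)"
  unfolding restr_snd by simp

lemma restr_quot:
  assumes g: "is_graph G" and P: "admissible P G" and Qp: "partition_of Q (\<Union>(fst G))"
    and ref: "\<And>C. C \<in> P \<Longrightarrow> \<exists>D\<in>Q. C \<subseteq> D"
  shows "restr_graph (quot_graph G P) Q = quot_graph (restr_graph G Q) P"
proof -
  have "snd (restr_graph (quot_graph G P) Q) = snd (quot_graph (restr_graph G Q) P)"
  proof (rule set_eqI)
    fix e
    show "e \<in> snd (restr_graph (quot_graph G P) Q) \<longleftrightarrow> e \<in> snd (quot_graph (restr_graph G Q) P)"
    proof
      assume "e \<in> snd (restr_graph (quot_graph G P) Q)"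
      then have e: "e \<in> snd (quot_graph G P)" "\<exists>D\<in>Q. \<Union>e \<subseteq> D" unfolding restr_mem by auto
      obtain D where D: "D \<in> Q" "\<Union>e \<subseteq> D" using e(2) by blast
      obtain C1 C2 v w where c: "e = {C1, C2}" "C1 \<in> P" "C2 \<in> P" "C1 \<noteq> C2" "{v, w} \<in> snd G" "v \<subseteq> C1" "w \<subseteq> C2"
        using e(1) by (rule quot_memE)
      have "\<Union>{v, w} \<subseteq> D" using c(1,6,7) D(2) by auto
      then have "{v, w} \<in> snd (restr_graph G Q)" unfolding restr_mem using c(5) D(1) by blast
      then show "e \<in> snd (quot_graph (restr_graph G Q) P)" using quot_memI[OF c(2-4) _ c(6,7)] c(1) by simp
    next
      assume "e \<in> snd (quot_graph (restr_graph G Q) P)"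
      then obtain C1 C2 v w where c: "e = {C1, C2}" "C1 \<in> P" "C2 \<in> P" "C1 \<noteq> C2"
          "{v, w} \<in> snd (restr_graph G Q)" "v \<subseteq> C1" "w \<subseteq> C2"
        by (rule quot_memE)
      have vw: "{v, w} \<in> snd G" "\<exists>D\<in>Q. \<Union>{v, w} \<subseteq> D" using c(5) unfolding restr_mem by simp_all
      obtain D where D0: "D \<in> Q" "\<Union>{v, w} \<subseteq> D" using vw(2) by blast
      have D: "D \<in> Q" "v \<subseteq> D" "w \<subseteq> D" using D0 by simp_all
      have vwV: "v \<in> fst G" "w \<in> fst G" using graph_edge_in[OF g vw(1)] by auto
      have "C1 \<subseteq> D" using refine_sub[OF g P Qp ref vwV(1) c(6) c(2) D(2) D(1)] .
      moreover have "C2 \<subseteq> D" using refine_sub[OF g P Qp ref vwV(2) c(7) c(3) D(3) D(1)] .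
      moreover have "e \<in> snd (quot_graph G P)" using quot_memI[OF c(2-4) vw(1) c(6,7)] c(1) by simp
      ultimately have "e \<in> snd (quot_graph G P)" "\<Union>e \<subseteq> D" using c(1) by simp_all
      then show "e \<in> snd (restr_graph (quot_graph G P) Q)" unfolding restr_mem using D(1) by blast
    qed
  qed
  then show ?thesis by (simp add: prod_eq_iff)
qed

lemma restr_restr:
  assumes ref: "\<And>C. C \<in> P \<Longrightarrow> \<exists>D\<in>Q. C \<subseteq> D"
  shows "restr_graph (restr_graph G Q) P = restr_graph G P"
proof -
  have "snd (restr_graph (restr_graph G Q) P) = snd (restr_graph G P)"
  proof (rule set_eqI)
    fix e
    show "e \<in> snd (restr_graph (restr_graph G Q) P) \<longleftrightarrow> e \<in> snd (restr_graph G P)"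
    proof
      assume "e \<in> snd (restr_graph (restr_graph G Q) P)"
      then show "e \<in> snd (restr_graph G P)" unfolding restr_mem by simp
    next
      assume "e \<in> snd (restr_graph G P)"
      then have e: "e \<in> snd G" "\<exists>C\<in>P. \<Union>e \<subseteq> C" unfolding restr_mem by simp_all
      then obtain C where C: "C \<in> P" "\<Union>e \<subseteq> C" by blast
      obtain D where "D \<in> Q" "C \<subseteq> D" using ref[OF C(1)] by blast
      then have "\<exists>D\<in>Q. \<Union>e \<subseteq> D" using C(2) by blast
      then show "e \<in> snd (restr_graph (restr_graph G Q) P)" unfolding restr_mem using e by simp
    qed
  qed
  then show ?thesis by (simp add: prod_eq_iff)
qed

lemma assoc:
  fixes a b c :: "graph \<Rightarrow> 'k::field"
  assumes g: "is_graph G"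
  shows "char_prod (char_prod a b) c G = char_prod a (char_prod b c) G"
proof -
  define AG where "AG = {P. admissible P G}"
  have fin: "finite AG" unfolding AG_def using adm_finite[OF g] .
  define F where "F P Q = a (quot_graph G Q) * b (quot_graph (restr_graph G Q) P) * c (restr_graph G P)" for P Q
  have step1: "char_prod (char_prod a b) c G = (\<Sum>P\<in>AG. \<Sum>Q\<in>{Q \<in> AG. admissible Q (quot_graph G P)}. F P Q)"
    unfolding char_prod_def AG_def[symmetric] sum_distrib_right
  proof (rule sum.cong[OF refl])
    fix P assume P: "P \<in> AG"
    then have PG: "admissible P G" unfolding AG_def by simp
    have set: "{Q. admissible Q (quot_graph G P)} = {Q \<in> AG. admissible Q (quot_graph G P)}"
      unfolding AG_def using assoc_adm1(1)[OF g PG] by blast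
    show "(\<Sum>Q\<in>{Q. admissible Q (quot_graph G P)}. a (quot_graph (quot_graph G P) Q) * b (restr_graph (quot_graph G P) Q) * c (restr_graph G P))
        = (\<Sum>Q\<in>{Q \<in> AG. admissible Q (quot_graph G P)}. F P Q)"
      unfolding set
    proof (rule sum.cong[OF refl])
      fix Q assume "Q \<in> {Q \<in> AG. admissible Q (quot_graph G P)}"
      then have Q: "admissible Q (quot_graph G P)" by simp
      have Qp: "partition_of Q (\<Union>(fst G))" using admD(1)[OF Q] partition_Un[OF admD(1)[OF PG]] by simp
      have ref: "\<And>C. C \<in> P \<Longrightarrow> \<exists>D\<in>Q. C \<subseteq> D" using admD(2)[OF Q] by simp
      show "a (quot_graph (quot_graph G P) Q) * b (restr_graph (quot_graph G P) Q) * c (restr_graph G P) = F P Q"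
        using quot_quot[OF g PG Qp ref] restr_quot[OF g PG Qp ref] restr_restr[OF ref] by (simp add: F_def)
    qed
  qed
  have step2: "(\<Sum>P\<in>AG. \<Sum>Q\<in>{Q \<in> AG. admissible Q (quot_graph G P)}. F P Q)
      = (\<Sum>Q\<in>AG. \<Sum>P\<in>{P \<in> AG. admissible Q (quot_graph G P)}. F P Q)"
    by (rule sum.swap_restrict[OF fin fin])
  have step3: "(\<Sum>Q\<in>AG. \<Sum>P\<in>{P \<in> AG. admissible Q (quot_graph G P)}. F P Q) = char_prod a (char_prod b c) G"
    unfolding char_prod_def AG_def[symmetric] sum_distrib_left
  proof (rule sum.cong[OF refl])
    fix Q assume "Q \<in> AG"
    then have Q: "admissible Q G" unfolding AG_def by simp
    have set: "{P \<in> AG. admissible Q (quot_graph G P)} = {P. admissible P (restr_graph G Q)}"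
    proof (rule set_eqI)
      fix P
      show "P \<in> {P \<in> AG. admissible Q (quot_graph G P)} \<longleftrightarrow> P \<in> {P. admissible P (restr_graph G Q)}"
      proof
        assume "P \<in> {P \<in> AG. admissible Q (quot_graph G P)}"
        then have "admissible P G" "admissible Q (quot_graph G P)" unfolding AG_def by auto
        then show "P \<in> {P. admissible P (restr_graph G Q)}" using assoc_adm1(2)[OF g] by blast
      next
        assume "P \<in> {P. admissible P (restr_graph G Q)}"
        then have P: "admissible P (restr_graph G Q)" by simp
        show "P \<in> {P \<in> AG. admissible Q (quot_graph G P)}" unfolding AG_def
          using assoc_refine(1)[OF g Q P] assoc_adm2[OF g Q P] by simp
      qed
    qed
    show "(\<Sum>P\<in>{P \<in> AG. admissible Q (quot_graph G P)}. F P Q) =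
        (\<Sum>P\<in>{P. admissible P (restr_graph G Q)}. a (quot_graph G Q) * (b (quot_graph (restr_graph G Q) P) * c (restr_graph (restr_graph G Q) P)))"
      unfolding set
    proof (rule sum.cong[OF refl])
      fix P assume "P \<in> {P. admissible P (restr_graph G Q)}"
      then have P: "admissible P (restr_graph G Q)" by simp
      have ref: "\<And>C. C \<in> P \<Longrightarrow> \<exists>D\<in>Q. C \<subseteq> D" using assoc_refine(2)[OF g Q P] by blast
      show "F P Q = a (quot_graph G Q) * (b (quot_graph (restr_graph G Q) P) * c (restr_graph (restr_graph G Q) P))"
      proof -
        have "restr_graph (restr_graph G Q) P = restr_graph G P" by (rule restr_restr[OF ref])
        then show ?thesis unfolding F_def by (simp add: mult.assoc)
      qed
    qed
  qed
  show ?thesis using step1 step2 step3 by simp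
qed


function mu_inv :: "(graph \<Rightarrow> 'k::field) \<Rightarrow> graph \<Rightarrow> 'k" where
  "mu_inv lam G = (if is_graph G then
     (eps' G - (\<Sum>P\<in>{P. admissible P G \<and> \<not> internal P G}. lam (quot_graph G P) * mu_inv lam (restr_graph G P)))
       / lam (quot_graph G (KK G))
   else 0)"
  by auto
termination
proof (relation "measure (\<lambda>(lam, G). card (snd G))")
  show "wf (measure (\<lambda>(lam, G). card (snd G)))" by simp
  fix lam :: "graph \<Rightarrow> 'k" and G P
  assume g: "is_graph G" and P: "P \<in> {P. admissible P G \<and> \<not> internal P G}"
  have "snd (restr_graph G P) \<subset> snd G" using restr_snd_sub[of G P] P internal_iff[of P G] by auto
  then have "card (snd (restr_graph G P)) < card (snd G)" using graph_finite_E[OF g] by (rule psubset_card_mono[rotated])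
  then show "((lam, restr_graph G P), lam, G) \<in> measure (\<lambda>(lam, G). card (snd G))" by simp
qed

declare mu_inv.simps[simp del]

definition nzb :: "(graph \<Rightarrow> 'k::field) \<Rightarrow> bool" where
  "nzb lam \<longleftrightarrow> (\<forall>A. finite A \<and> A \<noteq> {} \<longrightarrow> lam (bullet A) \<noteq> 0)"

lemma charD:
  assumes "character lam"
  shows "\<And>G f. is_graph G \<Longrightarrow> inj_on f (\<Union>(fst G)) \<Longrightarrow> lam (map_graph f G) = lam G"
    "\<And>G H. is_graph G \<Longrightarrow> is_graph H \<Longrightarrow> \<Union>(fst G) \<inter> \<Union>(fst H) = {} \<Longrightarrow>
            lam (graph_union G H) = lam G * lam H"
    "lam empty_graph = 1"
  using assms unfolding character_def by blast+

lemma is_graph_edgeless: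
  assumes "finite F" "\<And>B. B \<in> F \<Longrightarrow> B \<noteq> {} \<and> finite B" "\<And>B C. B \<in> F \<Longrightarrow> C \<in> F \<Longrightarrow> B \<noteq> C \<Longrightarrow> B \<inter> C = {}"
  shows "is_graph (F, {})"
proof -
  have "finite (\<Union>F)" using assms(1,2) by (simp add: finite_Union)
  moreover have "partition_of F (\<Union>F)" unfolding partition_of_def
  proof (intro conjI ballI impI)
    fix B assume "B \<in> F" then show "B \<noteq> {}" using assms(2) by blast
  next
    fix B C assume "B \<in> F" "C \<in> F" "B \<noteq> C" then show "B \<inter> C = {}" using assms(3) by blast
  qed simp
  ultimately show ?thesis unfolding is_graph_def by simp
qed

lemma lam_edgeless:
  assumes ch: "character lam" and nz: "nzb lam"
  shows "finite F \<Longrightarrow> (\<And>B. B \<in> F \<Longrightarrow> B \<noteq> {} \<and> finite B) \<Longrightarrow>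
     (\<And>B C. B \<in> F \<Longrightarrow> C \<in> F \<Longrightarrow> B \<noteq> C \<Longrightarrow> B \<inter> C = {}) \<Longrightarrow> lam (F, {}) \<noteq> 0"
proof (induction F rule: finite_induct)
  case empty
  then show ?case using charD(3)[OF ch] unfolding empty_graph_def by simp
next
  case (insert C F)
  have C0: "C \<noteq> {} \<and> finite C" using insert.prems(1)[of C] by simp
  have C: "C \<noteq> {}" "finite C" using C0 by simp_all
  have p1: "\<And>B. B \<in> F \<Longrightarrow> B \<noteq> {} \<and> finite B" using insert.prems(1) by simp
  have p2: "\<And>B C'. B \<in> F \<Longrightarrow> C' \<in> F \<Longrightarrow> B \<noteq> C' \<Longrightarrow> B \<inter> C' = {}" using insert.prems(2) by simp
  have IH: "lam (F, {}) \<noteq> 0" by (rule insert.IH[OF p1 p2])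
  have gF: "is_graph (F, {})" by (rule is_graph_edgeless[OF insert.hyps(1) p1 p2])
  have gC: "is_graph (bullet C)" unfolding bullet_def using is_graph_edgeless[of "{C}"] C by simp
  have disj: "\<Union>(fst (bullet C)) \<inter> \<Union>(fst (F, {})) = {}"
  proof -
    have "C \<inter> B = {}" if "B \<in> F" for B
    proof -
      have "C \<noteq> B" using insert.hyps(2) that by blast
      then show ?thesis using insert.prems(2)[of C B] that by simp
    qed
    then have "C \<inter> \<Union>F = {}" by blast
    then show ?thesis unfolding bullet_def by simp
  qed
  have "graph_union (bullet C) (F, {}) = (insert C F, {})" unfolding graph_union_def bullet_def by simp
  then have "lam (insert C F, {}) = lam (bullet C) * lam (F, {})" using charD(2)[OF ch gC gF disj] by simp
  moreover have "lam (bullet C) \<noteq> 0" using nz C unfolding nzb_def by blast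
  ultimately show ?case using IH by simp
qed

lemma quot_KK:
  assumes g: "is_graph G"
  shows "quot_graph G (KK G) = (KK G, {})"
  using quot_snd_empty[OF g KK_adm[OF g]] KK_internal[OF g] by (simp add: prod_eq_iff)

lemma lam_quot_KK:
  assumes ch: "character lam" and nz: "nzb lam" and g: "is_graph G"
  shows "lam (quot_graph G (KK G)) \<noteq> 0"
proof -
  have p: "partition_of (KK G) (\<Union>(fst G))" using KK_partition[OF g] .
  have fU: "finite (\<Union>(fst G))" using is_graphD(1)[OF g] .
  have U: "\<Union>(KK G) = \<Union>(fst G)" using partition_Un[OF p] .
  have fK: "finite (KK G)" using fU unfolding U[symmetric] by (rule finite_UnionD)
  have q1: "B \<noteq> {} \<and> finite B" if "B \<in> KK G" for B
  proof
    show "B \<noteq> {}" using partition_ne[OF p that] .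
    have "B \<subseteq> \<Union>(KK G)" using that by blast
    then show "finite B" using fU U by (metis finite_subset)
  qed
  have q2: "B \<inter> C = {}" if "B \<in> KK G" "C \<in> KK G" "B \<noteq> C" for B C
    using partition_disj[OF p that] .
  show ?thesis unfolding quot_KK[OF g] by (rule lam_edgeless[OF ch nz fK q1 q2])
qed

lemma mu_inv_unfold:
  assumes g: "is_graph G"
  shows "mu_inv lam G = (eps' G - (\<Sum>P\<in>{P. admissible P G \<and> \<not> internal P G}. lam (quot_graph G P) * mu_inv lam (restr_graph G P)))
       / lam (quot_graph G (KK G))"
  using mu_inv.simps[of lam G] g by simp

lemma adm_split:
  assumes g: "is_graph G"
  shows "{P. admissible P G} - {KK G} = {P. admissible P G \<and> \<not> internal P G}"
  using adm_internal_iff[OF g] by blast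

lemma sum_adm_split:
  fixes h :: "nat set set \<Rightarrow> 'k::field"
  assumes g: "is_graph G"
  shows "(\<Sum>P\<in>{P. admissible P G}. h P) = h (KK G) + (\<Sum>P\<in>{P. admissible P G \<and> \<not> internal P G}. h P)"
  using sum.remove[OF adm_finite[OF g], of "KK G" h] KK_adm[OF g] adm_split[OF g] by simp

lemma mu_inv_eq:
  assumes ch: "character lam" and nz: "nzb lam" and g: "is_graph G"
  shows "char_prod lam (mu_inv lam) G = eps' G"
proof -
  define S where "S = (\<Sum>P\<in>{P. admissible P G \<and> \<not> internal P G}. lam (quot_graph G P) * mu_inv lam (restr_graph G P))"
  define c where "c = lam (quot_graph G (KK G))"
  have c: "c \<noteq> 0" unfolding c_def using lam_quot_KK[OF ch nz g] .
  have r: "restr_graph G (KK G) = G" using internal_restr KK_internal[OF g] by blast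
  have "char_prod lam (mu_inv lam) G = c * mu_inv lam G + S"
    unfolding char_prod_def sum_adm_split[OF g] S_def c_def r ..
  also have "mu_inv lam G = (eps' G - S) / c" unfolding S_def c_def by (rule mu_inv_unfold[OF g])
  finally show ?thesis using c by simp
qed

lemma mu_inv_edgeless:
  assumes g: "is_graph G" and e: "snd G = {}"
  shows "mu_inv lam G = 1 / lam (KK G, {})"
proof -
  have "{P. admissible P G \<and> \<not> internal P G} = {}" unfolding internal_def using e by simp
  note u = mu_inv_unfold[OF g, of lam, unfolded this sum.empty]
  show ?thesis using u quot_KK[OF g] e unfolding eps'_def by simp
qed

lemma KK_bullet:
  "KK (bullet A) = {A}"
proof -
  have "{w \<in> {A}. (A, w) \<in> (reach (bullet A))\<^sup>*} = {A}" by blast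
  then have "comp_of (bullet A) A = A" unfolding comp_of_def bullet_def by simp
  then show ?thesis unfolding KK_def bullet_def by simp
qed

lemma is_graph_bullet: "finite A \<Longrightarrow> A \<noteq> {} \<Longrightarrow> is_graph (bullet A)"
  unfolding bullet_def using is_graph_edgeless[of "{A}"] by simp

lemma mu_inv_bullet:
  assumes "finite A" "A \<noteq> {}"
  shows "mu_inv lam (bullet A) = 1 / lam (bullet A)"
  using mu_inv_edgeless[OF is_graph_bullet[OF assms]] KK_bullet unfolding bullet_def by simp

lemma mu_inv_empty:
  assumes ch: "character lam"
  shows "mu_inv lam empty_graph = 1"
proof -
  have g: "is_graph empty_graph" unfolding empty_graph_def is_graph_def partition_of_def by simp
  have "KK empty_graph = {}" unfolding KK_def empty_graph_def by simp
  then show ?thesis using mu_inv_edgeless[OF g, of lam] charD(3)[OF ch] unfolding empty_graph_def by simp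
qed


lemma img_sub_iff:
  assumes "inj_on f A" "B \<subseteq> A" "C \<subseteq> A"
  shows "f ` B \<subseteq> f ` C \<longleftrightarrow> B \<subseteq> C"
proof
  assume h: "f ` B \<subseteq> f ` C"
  show "B \<subseteq> C"
  proof
    fix x assume x: "x \<in> B"
    then have "f x \<in> f ` C" using h by blast
    then show "x \<in> C" using inj_on_image_mem_iff[OF assms(1) _ assms(3)] x assms(2) by blast
  qed
qed (rule image_mono)

lemma partition_image:
  assumes f: "inj_on f A" and P: "partition_of P A"
  shows "partition_of ((`) f ` P) (f ` A)"
  unfolding partition_of_def
proof (intro conjI ballI impI)
  have sub: "B \<subseteq> A" if "B \<in> P" for B using partition_Un[OF P] that by blast
  fix B' assume "B' \<in> (`) f ` P"
  then obtain B where "B \<in> P" "B' = f ` B" by blast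
  then show "B' \<noteq> {}" using partition_ne[OF P] by blast
next
  have sub: "B \<subseteq> A" if "B \<in> P" for B using partition_Un[OF P] that by blast
  fix B' C' assume B': "B' \<in> (`) f ` P" and C': "C' \<in> (`) f ` P" and ne: "B' \<noteq> C'"
  obtain B where B: "B \<in> P" "B' = f ` B" using B' by blast
  obtain C where C: "C \<in> P" "C' = f ` C" using C' by blast
  have "B \<noteq> C" using ne B C by blast
  then have "B \<inter> C = {}" using partition_disj[OF P B(1) C(1)] by simp
  then show "B' \<inter> C' = {}" using inj_on_image_Int[OF f sub[OF B(1)] sub[OF C(1)]] B C by simp
next
  show "\<Union>((`) f ` P) = f ` A" using partition_Un[OF P] by blast
qed

lemma map_graph_fst: "fst (map_graph f G) = (`) f ` fst G"
  unfolding map_graph_def by simp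

lemma map_graph_snd: "snd (map_graph f G) = (`) ((`) f) ` snd G"
  unfolding map_graph_def by simp

lemma map_graph_U: "\<Union>(fst (map_graph f G)) = f ` \<Union>(fst G)"
  unfolding map_graph_fst by blast

lemma graph_vsubA: "is_graph G \<Longrightarrow> v \<in> fst G \<Longrightarrow> v \<subseteq> \<Union>(fst G)"
  by blast

lemma is_graph_map:
  assumes g: "is_graph G" and f: "inj_on f (\<Union>(fst G))"
  shows "is_graph (map_graph f G)"
  unfolding is_graph_def map_graph_U
proof (intro conjI ballI)
  show "finite (f ` \<Union>(fst G))" using is_graphD(1)[OF g] by simp
  show "partition_of (fst (map_graph f G)) (f ` \<Union>(fst G))"
    unfolding map_graph_fst by (rule partition_image[OF f is_graphD(2)[OF g]])
  fix e' assume "e' \<in> snd (map_graph f G)"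
  then obtain e where e: "e \<in> snd G" "e' = (`) f ` e" unfolding map_graph_snd by blast
  obtain v w where vw: "v \<in> fst G" "w \<in> fst G" "v \<noteq> w" "e = {v, w}" using is_graphD(3)[OF g e(1)] by blast
  have "f ` v \<noteq> f ` w" using inj_on_image_eq_iff[OF f] vw by blast
  then show "\<exists>v' w'. v' \<in> fst (map_graph f G) \<and> w' \<in> fst (map_graph f G) \<and> v' \<noteq> w' \<and> e' = {v', w'}"
    unfolding map_graph_fst using vw e(2) by blast
qed

lemma adm_map:
  assumes g: "is_graph G" and f: "inj_on f (\<Union>(fst G))" and P: "admissible P G"
  shows "admissible ((`) f ` P) (map_graph f G)"
  unfolding admissible_def map_graph_U
proof (intro conjI ballI)
  define A where "A = \<Union>(fst G)"
  have Pp: "partition_of P A" using admD(1)[OF P] unfolding A_def .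
  have subP: "C \<subseteq> A" if "C \<in> P" for C using partition_Un[OF Pp] that by blast
  have subV: "v \<subseteq> A" if "v \<in> fst G" for v using that unfolding A_def by blast
  show "partition_of ((`) f ` P) (f ` \<Union>(fst G))" using partition_image[OF f admD(1)[OF P]] .
  fix v' assume "v' \<in> fst (map_graph f G)"
  then obtain v where v: "v \<in> fst G" "v' = f ` v" unfolding map_graph_fst by blast
  obtain C where "C \<in> P" "v \<subseteq> C" using admD(2)[OF P v(1)] by blast
  then show "\<exists>C'\<in>(`) f ` P. v' \<subseteq> C'" using v(2) by blast
next
  define A where "A = \<Union>(fst G)"
  have fA: "inj_on f A" using f unfolding A_def .
  have Pp: "partition_of P A" using admD(1)[OF P] unfolding A_def .
  have subP: "C \<subseteq> A" if "C \<in> P" for C using partition_Un[OF Pp] that by blast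
  have subV: "v \<subseteq> A" if "v \<in> fst G" for v using that unfolding A_def by blast
  fix C' assume "C' \<in> (`) f ` P"
  then obtain C where C: "C \<in> P" "C' = f ` C" by blast
  define W where "W = {v \<in> fst G. v \<subseteq> C}"
  define W' where "W' = {v' \<in> fst (map_graph f G). v' \<subseteq> C'}"
  have W'eq: "W' = (`) f ` W"
  proof
    show "W' \<subseteq> (`) f ` W"
    proof
      fix v' assume "v' \<in> W'"
      then obtain v where v: "v \<in> fst G" "v' = f ` v" "f ` v \<subseteq> f ` C" unfolding W'_def map_graph_fst C(2) by blast
      then have "v \<subseteq> C" using img_sub_iff[OF fA subV[OF v(1)] subP[OF C(1)]] by simp
      then show "v' \<in> (`) f ` W" unfolding W_def using v by blast
    qed
    show "(`) f ` W \<subseteq> W'" unfolding W_def W'_def map_graph_fst C(2) by blast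
  qed
  have cW: "connected_on (snd G) W" using admD(3)[OF P C(1)] unfolding W_def .
  have step: "((`) f x, (`) f y) \<in> (crel (snd (map_graph f G)) W')\<^sup>*" if "(x, y) \<in> crel (snd G) W" for x y
  proof -
    have xy: "x \<in> W" "y \<in> W" "{x, y} \<in> snd G" using that unfolding crel_def by auto
    have "image (image f) {x, y} \<in> snd (map_graph f G)" unfolding map_graph_snd using xy(3) by blast
    then have "{f ` x, f ` y} \<in> snd (map_graph f G)" by simp
    then have "(f ` x, f ` y) \<in> crel (snd (map_graph f G)) W'" unfolding crel_def W'eq using xy by blast
    then show ?thesis by blast
  qed
  show "connected_on (snd (map_graph f G)) {v \<in> fst (map_graph f G). v \<subseteq> C'}"
    unfolding connected_on_alt W'_def[symmetric]
  proof (intro conjI ballI)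
    show "W' \<noteq> {}" using cW unfolding W'eq connected_on_def by simp
    fix a' b' assume "a' \<in> W'" "b' \<in> W'"
    then obtain a b where ab: "a \<in> W" "b \<in> W" "a' = f ` a" "b' = f ` b" unfolding W'eq by blast
    have "(a, b) \<in> (crel (snd G) W)\<^sup>*" using conn_path[OF cW ab(1,2)] .
    then have "((`) f a, (`) f b) \<in> (crel (snd (map_graph f G)) W')\<^sup>*" by (rule rtrancl_hom) (rule step)
    then show "(a', b') \<in> (crel (snd (map_graph f G)) W')\<^sup>*" using ab by simp
  qed
qed


lemma map_graph_Uedge: "\<Union>(image f ` e) = f ` \<Union>e"
  by blast

lemma quot_map:
  assumes g: "is_graph G" and f: "inj_on f (\<Union>(fst G))" and P: "admissible P G"
  shows "quot_graph (map_graph f G) ((`) f ` P) = map_graph f (quot_graph G P)"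
proof -
  define A where "A = \<Union>(fst G)"
  have fA: "inj_on f A" using f unfolding A_def .
  have Pp: "partition_of P A" using admD(1)[OF P] unfolding A_def .
  have subP: "C \<subseteq> A" if "C \<in> P" for C using partition_Un[OF Pp] that by blast
  have subV: "v \<subseteq> A" if "v \<in> fst G" for v using that unfolding A_def by blast
  have "snd (quot_graph (map_graph f G) ((`) f ` P)) = snd (map_graph f (quot_graph G P))"
  proof
    show "snd (quot_graph (map_graph f G) ((`) f ` P)) \<subseteq> snd (map_graph f (quot_graph G P))"
    proof
      fix e' assume "e' \<in> snd (quot_graph (map_graph f G) ((`) f ` P))"
      then obtain C' D' v' w' where c: "e' = {C', D'}" "C' \<in> (`) f ` P" "D' \<in> (`) f ` P" "C' \<noteq> D'"
          "{v', w'} \<in> snd (map_graph f G)" "v' \<subseteq> C'" "w' \<subseteq> D'" by (rule quot_memE)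
      obtain C where C: "C \<in> P" "C' = f ` C" using c(2) by blast
      obtain D where D: "D \<in> P" "D' = f ` D" using c(3) by blast
      have CD: "C \<noteq> D" using c(4) C D by blast
      obtain e0 where e0: "e0 \<in> snd G" "{v', w'} = image (image f) e0" using c(5) unfolding map_graph_snd by blast
      obtain v w where vw: "v \<in> fst G" "w \<in> fst G" "e0 = {v, w}" using is_graphD(3)[OF g e0(1)] by blast
      have vw': "{v', w'} = {f ` v, f ` w}" using e0(2) vw(3) by simp
      have e'eq: "e' = image (image f) {C, D}" using c(1) C(2) D(2) by simp
      have iv: "f ` x \<subseteq> f ` B \<longleftrightarrow> x \<subseteq> B" if "x \<in> fst G" "B \<in> P" for x B
        using img_sub_iff[OF fA subV[OF that(1)] subP[OF that(2)]] .
      have dd: "v' = f ` v \<and> w' = f ` w \<or> v' = f ` w \<and> w' = f ` v" using vw' unfolding doubleton_eq_iff .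
      have "{C, D} \<in> snd (quot_graph G P)"
      proof (cases "v' = f ` v \<and> w' = f ` w")
        case True
        then have "f ` v \<subseteq> f ` C" "f ` w \<subseteq> f ` D" using c(6,7) C(2) D(2) by simp_all
        then have "v \<subseteq> C" "w \<subseteq> D" using iv[OF vw(1) C(1)] iv[OF vw(2) D(1)] by simp_all
        moreover have "{v, w} \<in> snd G" using e0(1) vw(3) by simp
        ultimately show ?thesis using quot_memI[OF C(1) D(1) CD] by blast
      next
        case False
        then have "v' = f ` w \<and> w' = f ` v" using dd by blast
        then have "f ` w \<subseteq> f ` C" "f ` v \<subseteq> f ` D" using c(6,7) C(2) D(2) by simp_all
        then have "w \<subseteq> C" "v \<subseteq> D" using iv[OF vw(2) C(1)] iv[OF vw(1) D(1)] by simp_all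
        moreover have "{w, v} \<in> snd G" using e0(1) vw(3) by (simp add: insert_commute)
        ultimately show ?thesis using quot_memI[OF C(1) D(1) CD] by blast
      qed
      then show "e' \<in> snd (map_graph f (quot_graph G P))" unfolding map_graph_snd e'eq by blast
    qed
    show "snd (map_graph f (quot_graph G P)) \<subseteq> snd (quot_graph (map_graph f G) ((`) f ` P))"
    proof
      fix e' assume "e' \<in> snd (map_graph f (quot_graph G P))"
      then obtain e0 where e0: "e0 \<in> snd (quot_graph G P)" "e' = image (image f) e0" unfolding map_graph_snd by blast
      obtain C D v w where c: "e0 = {C, D}" "C \<in> P" "D \<in> P" "C \<noteq> D" "{v, w} \<in> snd G" "v \<subseteq> C" "w \<subseteq> D"
        using e0(1) by (rule quot_memE)
      have ne: "f ` C \<noteq> f ` D" using inj_on_image_eq_iff[OF fA subP[OF c(2)] subP[OF c(3)]] c(4) by simp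
      have "image (image f) {v, w} \<in> snd (map_graph f G)" unfolding map_graph_snd using c(5) by blast
      then have ed: "{f ` v, f ` w} \<in> snd (map_graph f G)" by simp
      have "f ` C \<in> (`) f ` P" "f ` D \<in> (`) f ` P" using c(2,3) by auto
      moreover have "f ` v \<subseteq> f ` C" "f ` w \<subseteq> f ` D" using c(6,7) by auto
      ultimately have "{f ` C, f ` D} \<in> snd (quot_graph (map_graph f G) ((`) f ` P))"
        by (rule quot_memI[OF _ _ ne ed])
      then show "e' \<in> snd (quot_graph (map_graph f G) ((`) f ` P))" using e0(2) c(1) by simp
    qed
  qed
  moreover have "fst (quot_graph (map_graph f G) ((`) f ` P)) = fst (map_graph f (quot_graph G P))"
    by (simp add: map_graph_fst)
  ultimately show ?thesis by (simp add: prod_eq_iff)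
qed

lemma restr_map:
  assumes g: "is_graph G" and f: "inj_on f (\<Union>(fst G))" and P: "admissible P G"
  shows "restr_graph (map_graph f G) ((`) f ` P) = map_graph f (restr_graph G P)"
proof -
  define A where "A = \<Union>(fst G)"
  have fA: "inj_on f A" using f unfolding A_def .
  have Pp: "partition_of P A" using admD(1)[OF P] unfolding A_def .
  have subP: "C \<subseteq> A" if "C \<in> P" for C using partition_Un[OF Pp] that by blast
  have subE: "\<Union>e \<subseteq> A" if eE: "e \<in> snd G" for e
  proof -
    obtain v w where vw: "v \<in> fst G" "w \<in> fst G" "e = {v, w}" using is_graphD(3)[OF g eE] by blast
    then have "\<Union>e = v \<union> w" by simp
    then show ?thesis using vw(1,2) unfolding A_def by blast
  qed
  have key: "(\<exists>C'\<in>(`) f ` P. \<Union>(image (image f) e) \<subseteq> C') \<longleftrightarrow> (\<exists>C\<in>P. \<Union>e \<subseteq> C)" if e: "e \<in> snd G" for e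
  proof
    assume "\<exists>C'\<in>(`) f ` P. \<Union>(image (image f) e) \<subseteq> C'"
    then obtain C' where C': "C' \<in> (`) f ` P" "\<Union>(image (image f) e) \<subseteq> C'" by blast
    then obtain C where C0: "C \<in> P" "C' = f ` C" by blast
    have C: "C \<in> P" "f ` \<Union>e \<subseteq> f ` C" using C0 C'(2) unfolding map_graph_Uedge by simp_all
    then have "\<Union>e \<subseteq> C" using img_sub_iff[OF fA subE[OF e] subP[OF C(1)]] by simp
    then show "\<exists>C\<in>P. \<Union>e \<subseteq> C" using C(1) by blast
  next
    assume "\<exists>C\<in>P. \<Union>e \<subseteq> C"
    then obtain C where C: "C \<in> P" "\<Union>e \<subseteq> C" by blast
    have "f ` \<Union>e \<subseteq> f ` C" using C(2) by (rule image_mono)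
    then have "\<Union>(image (image f) e) \<subseteq> f ` C" unfolding map_graph_Uedge .
    moreover have "f ` C \<in> (`) f ` P" using C(1) by (rule imageI)
    ultimately show "\<exists>C'\<in>(`) f ` P. \<Union>(image (image f) e) \<subseteq> C'" by blast
  qed
  have "snd (restr_graph (map_graph f G) ((`) f ` P)) = snd (map_graph f (restr_graph G P))"
  proof
    show "snd (restr_graph (map_graph f G) ((`) f ` P)) \<subseteq> snd (map_graph f (restr_graph G P))"
    proof
      fix e' assume "e' \<in> snd (restr_graph (map_graph f G) ((`) f ` P))"
      then have e': "e' \<in> snd (map_graph f G)" "\<exists>C'\<in>(`) f ` P. \<Union>e' \<subseteq> C'" unfolding restr_mem by simp_all
      then obtain e where e: "e \<in> snd G" "e' = image (image f) e" unfolding map_graph_snd by blast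
      then have "\<exists>C\<in>P. \<Union>e \<subseteq> C" using key[OF e(1)] e'(2) by simp
      then have "e \<in> snd (restr_graph G P)" unfolding restr_mem using e(1) by simp
      then show "e' \<in> snd (map_graph f (restr_graph G P))" unfolding map_graph_snd using e(2) by blast
    qed
    show "snd (map_graph f (restr_graph G P)) \<subseteq> snd (restr_graph (map_graph f G) ((`) f ` P))"
    proof
      fix e' assume "e' \<in> snd (map_graph f (restr_graph G P))"
      then obtain e where e: "e \<in> snd (restr_graph G P)" "e' = image (image f) e" unfolding map_graph_snd by blast
      then have e0: "e \<in> snd G" "\<exists>C\<in>P. \<Union>e \<subseteq> C" unfolding restr_mem by simp_all
      have "e' \<in> snd (map_graph f G)" unfolding map_graph_snd using e0(1) e(2) by blast
      moreover have "\<exists>C'\<in>(`) f ` P. \<Union>e' \<subseteq> C'" using key[OF e0(1)] e0(2) e(2) by simp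
      ultimately show "e' \<in> snd (restr_graph (map_graph f G) ((`) f ` P))" unfolding restr_mem by simp
    qed
  qed
  moreover have "fst (restr_graph (map_graph f G) ((`) f ` P)) = fst (map_graph f (restr_graph G P))"
    by (simp add: map_graph_fst)
  ultimately show ?thesis by (simp add: prod_eq_iff)
qed

lemma img2_cancel:
  assumes f: "inj_on f A" and sub: "\<And>C. C \<in> P \<Longrightarrow> C \<subseteq> A"
  shows "image (image (inv_into A f)) (image (image f) P) = P"
proof -
  have "image (image (inv_into A f)) (image (image f) P) = image (\<lambda>C. inv_into A f ` f ` C) P"
    by (simp add: image_image)
  also have "\<dots> = image (\<lambda>C. C) P" using inv_into_image_cancel[OF f sub] by (intro image_cong) auto
  finally show ?thesis by simp
qed

lemma map_inv:
  assumes g: "is_graph G" and f: "inj_on f (\<Union>(fst G))"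
  shows "map_graph (inv_into (\<Union>(fst G)) f) (map_graph f G) = G"
proof -
  define A where "A = \<Union>(fst G)"
  define h where "h = inv_into A f"
  have fA: "inj_on f A" using f unfolding A_def .
  have subV: "\<And>v. v \<in> fst G \<Longrightarrow> v \<subseteq> A" unfolding A_def by blast
  have V: "image (image h) (image (image f) (fst G)) = fst G" unfolding h_def by (rule img2_cancel[OF fA subV])
  have E: "image (image (image h)) (image (image (image f)) (snd G)) = snd G"
  proof -
    have "image (image (image h)) (image (image (image f)) (snd G)) = image (\<lambda>e. image (image h) (image (image f) e)) (snd G)"
      by (simp add: image_image)
    also have "\<dots> = image (\<lambda>e. e) (snd G)"
    proof (rule image_cong[OF refl])
      fix e assume e: "e \<in> snd G"
      have "\<And>v. v \<in> e \<Longrightarrow> v \<subseteq> A" using is_graphD(3)[OF g e] subV by blast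
      then show "image (image h) (image (image f) e) = e" unfolding h_def by (rule img2_cancel[OF fA])
    qed
    finally show ?thesis by simp
  qed
  show ?thesis using V E unfolding map_graph_def h_def A_def by (simp add: prod_eq_iff)
qed

lemma adm_bij:
  assumes g: "is_graph G" and f: "inj_on f (\<Union>(fst G))"
  shows "bij_betw (image (image f)) {P. admissible P G} {Q. admissible Q (map_graph f G)}"
proof -
  define A where "A = \<Union>(fst G)"
  define h where "h = inv_into A f"
  have fA: "inj_on f A" using f unfolding A_def .
  have U': "\<Union>(fst (map_graph f G)) = f ` A" unfolding map_graph_U A_def ..
  have g': "is_graph (map_graph f G)" using is_graph_map[OF g f] .
  have hinj: "inj_on h (\<Union>(fst (map_graph f G)))" unfolding U' h_def by (rule inj_on_inv_into) simp
  have hback: "map_graph h (map_graph f G) = G" unfolding h_def A_def by (rule map_inv[OF g f])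
  show ?thesis
  proof (rule bij_betw_byWitness[where f'="image (image h)"])
    show "\<forall>P\<in>{P. admissible P G}. image (image h) (image (image f) P) = P"
    proof
      fix P assume "P \<in> {P. admissible P G}"
      then have "partition_of P A" using admD(1) unfolding A_def by blast
      then have "\<And>C. C \<in> P \<Longrightarrow> C \<subseteq> A" using partition_Un by blast
      then show "image (image h) (image (image f) P) = P" unfolding h_def by (rule img2_cancel[OF fA])
    qed
    show "\<forall>Q\<in>{Q. admissible Q (map_graph f G)}. image (image f) (image (image h) Q) = Q"
    proof
      fix Q assume "Q \<in> {Q. admissible Q (map_graph f G)}"
      then have "partition_of Q (f ` A)" using admD(1) U' by fastforce
      then have sub: "\<And>C. C \<in> Q \<Longrightarrow> C \<subseteq> f ` A" using partition_Un by blast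
      have "image (image f) (image (image h) Q) = image (\<lambda>C. f ` h ` C) Q" by (simp add: image_image)
      also have "\<dots> = image (\<lambda>C. C) Q"
        by (rule image_cong[OF refl]) (use image_inv_into_cancel[OF refl sub] in \<open>simp add: h_def\<close>)
      finally show "image (image f) (image (image h) Q) = Q" by simp
    qed
    show "image (image f) ` {P. admissible P G} \<subseteq> {Q. admissible Q (map_graph f G)}"
      using adm_map[OF g f] by blast
    show "image (image h) ` {Q. admissible Q (map_graph f G)} \<subseteq> {P. admissible P G}"
      using adm_map[OF g' hinj] hback by auto
  qed
qed

lemma eps'_map: "eps' (map_graph f G) = eps' G"
  unfolding eps'_def map_graph_snd by simp

lemma mu_inv_map:
  assumes ch: "character lam" and nz: "nzb lam"
  shows "is_graph G \<Longrightarrow> inj_on f (\<Union>(fst G)) \<Longrightarrow> mu_inv lam (map_graph f G) = mu_inv lam G"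
proof (induction "card (snd G)" arbitrary: G f rule: less_induct)
  case less
  note g = less.prems(1) and f = less.prems(2)
  define G' where "G' = map_graph f G"
  define mu where "mu = mu_inv lam"
  define NI where "NI = {P. admissible P G \<and> \<not> internal P G}"
  define c where "c = lam (quot_graph G (KK G))"
  have c: "c \<noteq> 0" unfolding c_def using lam_quot_KK[OF ch nz g] .
  have g': "is_graph G'" unfolding G'_def using is_graph_map[OF g f] .
  have rK: "restr_graph G (KK G) = G" using internal_restr KK_internal[OF g] by blast
  have trm: "lam (quot_graph G' (image (image f) P)) * mu (restr_graph G' (image (image f) P))
      = lam (quot_graph G P) * mu (map_graph f (restr_graph G P))" if P: "admissible P G" for P
  proof -
    have gq: "is_graph (quot_graph G P)" using is_graph_quot[OF g admD(1)[OF P]] .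
    have fq: "inj_on f (\<Union>(fst (quot_graph G P)))" using f partition_Un[OF admD(1)[OF P]] by simp
    show ?thesis unfolding G'_def quot_map[OF g f P] restr_map[OF g f P] charD(1)[OF ch gq fq] ..
  qed
  have "eps' G' = char_prod lam mu G'" unfolding mu_def using mu_inv_eq[OF ch nz g'] by simp
  also have "\<dots> = (\<Sum>Q\<in>{Q. admissible Q G'}. lam (quot_graph G' Q) * mu (restr_graph G' Q))"
    unfolding char_prod_def ..
  also have "\<dots> = (\<Sum>P\<in>{P. admissible P G}. lam (quot_graph G' (image (image f) P)) * mu (restr_graph G' (image (image f) P)))"
    using sum.reindex_bij_betw[OF adm_bij[OF g f], of "\<lambda>Q. lam (quot_graph G' Q) * mu (restr_graph G' Q)"]
    unfolding G'_def by simp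
  also have "\<dots> = (\<Sum>P\<in>{P. admissible P G}. lam (quot_graph G P) * mu (map_graph f (restr_graph G P)))"
    using trm by (intro sum.cong) auto
  also have "\<dots> = c * mu G' + (\<Sum>P\<in>NI. lam (quot_graph G P) * mu (map_graph f (restr_graph G P)))"
    unfolding sum_adm_split[OF g] c_def NI_def rK G'_def ..
  also have "(\<Sum>P\<in>NI. lam (quot_graph G P) * mu (map_graph f (restr_graph G P)))
      = (\<Sum>P\<in>NI. lam (quot_graph G P) * mu (restr_graph G P))"
  proof (rule sum.cong[OF refl])
    fix P assume "P \<in> NI"
    then have P: "admissible P G" "\<not> internal P G" unfolding NI_def by auto
    have "snd (restr_graph G P) \<subset> snd G" using restr_snd_sub[of G P] P(2) internal_iff[of P G] by auto
    then have lt: "card (snd (restr_graph G P)) < card (snd G)"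
      using graph_finite_E[OF g] by (rule psubset_card_mono[rotated])
    have "mu (map_graph f (restr_graph G P)) = mu (restr_graph G P)" unfolding mu_def
      by (rule less.hyps[OF lt is_graph_restr[OF g]]) (simp add: f)
    then show "lam (quot_graph G P) * mu (map_graph f (restr_graph G P)) = lam (quot_graph G P) * mu (restr_graph G P)"
      by simp
  qed
  finally have e1: "eps' G' = c * mu G' + (\<Sum>P\<in>NI. lam (quot_graph G P) * mu (restr_graph G P))" .
  have "eps' G = char_prod lam mu G" unfolding mu_def using mu_inv_eq[OF ch nz g] by simp
  also have "\<dots> = c * mu G + (\<Sum>P\<in>NI. lam (quot_graph G P) * mu (restr_graph G P))"
    unfolding char_prod_def sum_adm_split[OF g] c_def NI_def rK ..
  finally have e2: "eps' G = c * mu G + (\<Sum>P\<in>NI. lam (quot_graph G P) * mu (restr_graph G P))" .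
  have "eps' G' = eps' G" unfolding G'_def by (rule eps'_map)
  then have "c * mu G' + (\<Sum>P\<in>NI. lam (quot_graph G P) * mu (restr_graph G P))
      = c * mu G + (\<Sum>P\<in>NI. lam (quot_graph G P) * mu (restr_graph G P))" using e1 e2 by metis
  then have "c * mu G' = c * mu G" by (rule add_right_imp_eq)
  then show ?case using c unfolding mu_def G'_def by simp
qed


lemma partition_union:
  assumes P: "partition_of P A" and Q: "partition_of Q B" and d: "A \<inter> B = {}"
  shows "partition_of (P \<union> Q) (A \<union> B)"
  unfolding partition_of_def
proof (intro conjI ballI impI)
  fix C assume "C \<in> P \<union> Q"
  then show "C \<noteq> {}" using partition_ne[OF P] partition_ne[OF Q] by blast
next
  fix C D assume C: "C \<in> P \<union> Q" and D: "D \<in> P \<union> Q" and ne: "C \<noteq> D"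
  have sP: "X \<subseteq> A" if "X \<in> P" for X using partition_Un[OF P] that by blast
  have sQ: "X \<subseteq> B" if "X \<in> Q" for X using partition_Un[OF Q] that by blast
  show "C \<inter> D = {}"
  proof (cases "C \<in> P")
    case CP: True
    show ?thesis
    proof (cases "D \<in> P")
      case True show ?thesis using partition_disj[OF P CP True ne] by simp
    next
      case False then have "D \<in> Q" using D by blast
      then show ?thesis using sP[OF CP] sQ d by blast
    qed
  next
    case False
    then have CQ: "C \<in> Q" using C by blast
    show ?thesis
    proof (cases "D \<in> Q")
      case True show ?thesis using partition_disj[OF Q CQ True ne] by simp
    next
      case False then have "D \<in> P" using D by blast
      then show ?thesis using sP sQ[OF CQ] d by blast
    qed
  qed
next
  show "\<Union>(P \<union> Q) = A \<union> B" using partition_Un[OF P] partition_Un[OF Q] by blast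
qed

lemma gu_fst: "fst (graph_union G H) = fst G \<union> fst H"
  unfolding graph_union_def by simp

lemma gu_snd: "snd (graph_union G H) = snd G \<union> snd H"
  unfolding graph_union_def by simp

lemma gu_U: "\<Union>(fst (graph_union G H)) = \<Union>(fst G) \<union> \<Union>(fst H)"
  unfolding gu_fst by blast

lemma gu_comm: "graph_union G H = graph_union H G"
  unfolding graph_union_def by (simp add: Un_commute)

lemma is_graph_union:
  assumes g: "is_graph G" and h: "is_graph H" and d: "\<Union>(fst G) \<inter> \<Union>(fst H) = {}"
  shows "is_graph (graph_union G H)"
  unfolding is_graph_def gu_U
proof (intro conjI ballI)
  show "finite (\<Union>(fst G) \<union> \<Union>(fst H))" using is_graphD(1)[OF g] is_graphD(1)[OF h] by simp
  show "partition_of (fst (graph_union G H)) (\<Union>(fst G) \<union> \<Union>(fst H))"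
    unfolding gu_fst by (rule partition_union[OF is_graphD(2)[OF g] is_graphD(2)[OF h] d])
  fix e assume "e \<in> snd (graph_union G H)"
  then have "e \<in> snd G \<or> e \<in> snd H" unfolding gu_snd by blast
  then show "\<exists>v w. v \<in> fst (graph_union G H) \<and> w \<in> fst (graph_union G H) \<and> v \<noteq> w \<and> e = {v, w}"
    unfolding gu_fst using is_graphD(3)[OF g] is_graphD(3)[OF h] by blast
qed

locale two_graphs =
  fixes G H :: graph
  assumes g: "is_graph G" and h: "is_graph H" and d: "\<Union>(fst G) \<inter> \<Union>(fst H) = {}"
begin

abbreviation "U \<equiv> graph_union G H"

lemma gU: "is_graph U" using is_graph_union[OF g h d] .

lemma vG_notH: "v \<in> fst G \<Longrightarrow> v \<subseteq> \<Union>(fst H) \<Longrightarrow> False"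
  using graph_vne[OF g] d by blast

lemma vH_notG: "v \<in> fst H \<Longrightarrow> v \<subseteq> \<Union>(fst G) \<Longrightarrow> False"
  using graph_vne[OF h] d by blast

lemma edge_G_notH: "{x, y} \<in> snd H \<Longrightarrow> x \<in> fst G \<Longrightarrow> False"
proof -
  assume e: "{x, y} \<in> snd H" and x: "x \<in> fst G"
  have "x \<in> fst H" using graph_edge_in[OF h e] by simp
  then show False using vG_notH[OF x] by blast
qed

lemma edge_H_notG: "{x, y} \<in> snd G \<Longrightarrow> x \<in> fst H \<Longrightarrow> False"
proof -
  assume e: "{x, y} \<in> snd G" and x: "x \<in> fst H"
  have "x \<in> fst G" using graph_edge_in[OF g e] by simp
  then show False using vH_notG[OF x] by blast
qed

lemma adm_union:
  assumes P1: "admissible P1 G" and P2: "admissible P2 H"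
  shows "admissible (P1 \<union> P2) U"
  unfolding admissible_def gu_U
proof (intro conjI ballI)
  show "partition_of (P1 \<union> P2) (\<Union>(fst G) \<union> \<Union>(fst H))"
    by (rule partition_union[OF admD(1)[OF P1] admD(1)[OF P2] d])
  fix v assume "v \<in> fst U"
  then have "v \<in> fst G \<or> v \<in> fst H" unfolding gu_fst by blast
  then show "\<exists>C\<in>P1 \<union> P2. v \<subseteq> C" using admD(2)[OF P1] admD(2)[OF P2] by blast
next
  fix C assume C: "C \<in> P1 \<union> P2"
  show "connected_on (snd U) {v \<in> fst U. v \<subseteq> C}"
  proof (cases "C \<in> P1")
    case True
    have sub: "C \<subseteq> \<Union>(fst G)" using partition_Un[OF admD(1)[OF P1]] True by blast
    have W: "{v \<in> fst U. v \<subseteq> C} = {v \<in> fst G. v \<subseteq> C}"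
      unfolding gu_fst using vH_notG sub by blast
    show ?thesis unfolding W
      by (rule connected_on_mono[OF admD(3)[OF P1 True]]) (simp add: gu_snd)
  next
    case False
    then have C2: "C \<in> P2" using C by blast
    have sub: "C \<subseteq> \<Union>(fst H)" using partition_Un[OF admD(1)[OF P2]] C2 by blast
    have W: "{v \<in> fst U. v \<subseteq> C} = {v \<in> fst H. v \<subseteq> C}"
      unfolding gu_fst using vG_notH sub by blast
    show ?thesis unfolding W
      by (rule connected_on_mono[OF admD(3)[OF P2 C2]]) (simp add: gu_snd)
  qed
qed

lemma adm_U_side:
  assumes P: "admissible P U" and C: "C \<in> P"
  shows "C \<subseteq> \<Union>(fst G) \<or> C \<subseteq> \<Union>(fst H)"
proof -
  define W where "W = {v \<in> fst U. v \<subseteq> C}"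
  have cW: "connected_on (snd U) W" using admD(3)[OF P C] unfolding W_def .
  have CW: "C = \<Union>W" unfolding W_def by (rule adm_class_union[OF gU P C])
  have "W \<noteq> {}" using cW unfolding connected_on_def by simp
  then obtain v where v: "v \<in> W" by blast
  then have "v \<in> fst G \<or> v \<in> fst H" unfolding W_def gu_fst by blast
  then show ?thesis
  proof
    assume vG: "v \<in> fst G"
    have "W \<subseteq> fst G"
    proof (rule conn_closed[OF cW v])
      show "v \<in> fst G" by (rule vG)
      fix x y assume xy: "x \<in> W" "y \<in> W" "{x, y} \<in> snd U" "x \<in> fst G"
      then have "{x, y} \<in> snd G \<or> {x, y} \<in> snd H" unfolding gu_snd by blast
      then show "y \<in> fst G" using graph_edge_in[OF g] edge_G_notH xy(4) by blast
    qed
    then have "C \<subseteq> \<Union>(fst G)" using CW by blast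
    then show ?thesis by blast
  next
    assume vH: "v \<in> fst H"
    have "W \<subseteq> fst H"
    proof (rule conn_closed[OF cW v])
      show "v \<in> fst H" by (rule vH)
      fix x y assume xy: "x \<in> W" "y \<in> W" "{x, y} \<in> snd U" "x \<in> fst H"
      then have "{x, y} \<in> snd G \<or> {x, y} \<in> snd H" unfolding gu_snd by blast
      then show "y \<in> fst H" using graph_edge_in[OF h] edge_H_notG xy(4) by blast
    qed
    then have "C \<subseteq> \<Union>(fst H)" using CW by blast
    then show ?thesis by blast
  qed
qed

lemma adm_U_split:
  assumes P: "admissible P U"
  shows "P = {C \<in> P. C \<subseteq> \<Union>(fst G)} \<union> {C \<in> P. C \<subseteq> \<Union>(fst H)}"
  using adm_U_side[OF P] by blast

lemma adm_U_left:
  assumes P: "admissible P U"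
  shows "admissible {C \<in> P. C \<subseteq> \<Union>(fst G)} G"
  unfolding admissible_def
proof (intro conjI ballI)
  define A where "A = \<Union>(fst G)"
  have Pp: "partition_of P (A \<union> \<Union>(fst H))" using admD(1)[OF P] unfolding gu_U A_def .
  show "partition_of {C \<in> P. C \<subseteq> \<Union>(fst G)} (\<Union>(fst G))"
    unfolding partition_of_def A_def[symmetric]
  proof (intro conjI ballI impI)
    fix C assume "C \<in> {C \<in> P. C \<subseteq> A}" then show "C \<noteq> {}" using partition_ne[OF Pp] by blast
  next
    fix B C assume "B \<in> {C \<in> P. C \<subseteq> A}" "C \<in> {C \<in> P. C \<subseteq> A}" "B \<noteq> C"
    then show "B \<inter> C = {}" using partition_disj[OF Pp] by blast
  next
    show "\<Union>{C \<in> P. C \<subseteq> A} = A"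
    proof
      show "\<Union>{C \<in> P. C \<subseteq> A} \<subseteq> A" by blast
      show "A \<subseteq> \<Union>{C \<in> P. C \<subseteq> A}"
      proof
        fix x assume x: "x \<in> A"
        then have "x \<in> \<Union>P" using partition_Un[OF Pp] by blast
        then obtain C where C: "C \<in> P" "x \<in> C" by blast
        have "C \<subseteq> A \<or> C \<subseteq> \<Union>(fst H)" using adm_U_side[OF P C(1)] unfolding A_def .
        moreover have "\<not> C \<subseteq> \<Union>(fst H)" using C(2) x d unfolding A_def by blast
        ultimately show "x \<in> \<Union>{C \<in> P. C \<subseteq> A}" using C by blast
      qed
    qed
  qed
next
  fix v assume v: "v \<in> fst G"
  then have "v \<in> fst U" unfolding gu_fst by blast
  then obtain C where C: "C \<in> P" "v \<subseteq> C" using admD(2)[OF P] by blast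
  have "C \<subseteq> \<Union>(fst G) \<or> C \<subseteq> \<Union>(fst H)" using adm_U_side[OF P C(1)] .
  moreover have "\<not> C \<subseteq> \<Union>(fst H)" using vG_notH[OF v] C(2) by blast
  ultimately show "\<exists>C\<in>{C \<in> P. C \<subseteq> \<Union>(fst G)}. v \<subseteq> C" using C by blast
next
  fix C assume C0: "C \<in> {C \<in> P. C \<subseteq> \<Union>(fst G)}"
  then have C: "C \<in> P" "C \<subseteq> \<Union>(fst G)" by auto
  have W: "{v \<in> fst U. v \<subseteq> C} = {v \<in> fst G. v \<subseteq> C}"
    unfolding gu_fst using vH_notG C(2) by blast
  have cW: "connected_on (snd U) {v \<in> fst G. v \<subseteq> C}" using admD(3)[OF P C(1)] unfolding W .
  show "connected_on (snd G) {v \<in> fst G. v \<subseteq> C}"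
  proof (rule connected_on_mono[OF cW])
    fix x y assume xy: "x \<in> {v \<in> fst G. v \<subseteq> C}" "y \<in> {v \<in> fst G. v \<subseteq> C}" "{x, y} \<in> snd U"
    then have "{x, y} \<in> snd G \<or> {x, y} \<in> snd H" unfolding gu_snd by blast
    then show "{x, y} \<in> snd G" using edge_G_notH xy(1) by blast
  qed
qed

end


lemma two_graphs_comm: "two_graphs G H \<Longrightarrow> two_graphs H G"
  unfolding two_graphs_def by blast

lemma adm_U_right:
  assumes tg: "two_graphs G H" and P: "admissible P (graph_union G H)"
  shows "admissible {C \<in> P. C \<subseteq> \<Union>(fst H)} H"
proof -
  have "admissible P (graph_union H G)" using P gu_comm by metis
  then show ?thesis using two_graphs.adm_U_left[OF two_graphs_comm[OF tg]] by blast
qed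

context two_graphs
begin

lemma sideP1: "admissible P1 G \<Longrightarrow> C \<in> P1 \<Longrightarrow> C \<subseteq> \<Union>(fst G)"
  using partition_Un[OF admD(1)] by blast

lemma sideP2: "admissible P2 H \<Longrightarrow> C \<in> P2 \<Longrightarrow> C \<subseteq> \<Union>(fst H)"
  using partition_Un[OF admD(1)] by blast

lemma quot_union:
  assumes P1: "admissible P1 G" and P2: "admissible P2 H"
  shows "quot_graph U (P1 \<union> P2) = graph_union (quot_graph G P1) (quot_graph H P2)"
proof -
  have "snd (quot_graph U (P1 \<union> P2)) = snd (quot_graph G P1) \<union> snd (quot_graph H P2)"
  proof
    show "snd (quot_graph U (P1 \<union> P2)) \<subseteq> snd (quot_graph G P1) \<union> snd (quot_graph H P2)"
    proof
      fix e assume "e \<in> snd (quot_graph U (P1 \<union> P2))"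
      then obtain C D v w where c: "e = {C, D}" "C \<in> P1 \<union> P2" "D \<in> P1 \<union> P2" "C \<noteq> D"
        "{v, w} \<in> snd U" "v \<subseteq> C" "w \<subseteq> D" by (rule quot_memE)
      have "{v, w} \<in> snd G \<or> {v, w} \<in> snd H" using c(5) unfolding gu_snd by blast
      then show "e \<in> snd (quot_graph G P1) \<union> snd (quot_graph H P2)"
      proof
        assume ed: "{v, w} \<in> snd G"
        have vw: "v \<in> fst G" "w \<in> fst G" using graph_edge_in[OF g ed] by auto
        have "C \<in> P1"
        proof (rule ccontr)
          assume "C \<notin> P1" then have "C \<in> P2" using c(2) by blast
          then have "v \<subseteq> \<Union>(fst H)" using sideP2[OF P2] c(6) by blast
          then show False using vG_notH[OF vw(1)] by blast
        qed
        moreover have "D \<in> P1"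
        proof (rule ccontr)
          assume "D \<notin> P1" then have "D \<in> P2" using c(3) by blast
          then have "w \<subseteq> \<Union>(fst H)" using sideP2[OF P2] c(7) by blast
          then show False using vG_notH[OF vw(2)] by blast
        qed
        ultimately have "{C, D} \<in> snd (quot_graph G P1)" by (rule quot_memI[OF _ _ c(4) ed c(6,7)])
        then show ?thesis using c(1) by blast
      next
        assume ed: "{v, w} \<in> snd H"
        have vw: "v \<in> fst H" "w \<in> fst H" using graph_edge_in[OF h ed] by auto
        have "C \<in> P2"
        proof (rule ccontr)
          assume "C \<notin> P2" then have "C \<in> P1" using c(2) by blast
          then have "v \<subseteq> \<Union>(fst G)" using sideP1[OF P1] c(6) by blast
          then show False using vH_notG[OF vw(1)] by blast
        qed
        moreover have "D \<in> P2"
        proof (rule ccontr)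
          assume "D \<notin> P2" then have "D \<in> P1" using c(3) by blast
          then have "w \<subseteq> \<Union>(fst G)" using sideP1[OF P1] c(7) by blast
          then show False using vH_notG[OF vw(2)] by blast
        qed
        ultimately have "{C, D} \<in> snd (quot_graph H P2)" by (rule quot_memI[OF _ _ c(4) ed c(6,7)])
        then show ?thesis using c(1) by blast
      qed
    qed
    show "snd (quot_graph G P1) \<union> snd (quot_graph H P2) \<subseteq> snd (quot_graph U (P1 \<union> P2))"
    proof
      fix e assume "e \<in> snd (quot_graph G P1) \<union> snd (quot_graph H P2)"
      then show "e \<in> snd (quot_graph U (P1 \<union> P2))"
      proof
        assume "e \<in> snd (quot_graph G P1)"
        then obtain C D v w where c: "e = {C, D}" "C \<in> P1" "D \<in> P1" "C \<noteq> D"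
          "{v, w} \<in> snd G" "v \<subseteq> C" "w \<subseteq> D" by (rule quot_memE)
        have q: "C \<in> P1 \<union> P2" "D \<in> P1 \<union> P2" "{v, w} \<in> snd U" using c(2,3,5) unfolding gu_snd by auto
        have "{C, D} \<in> snd (quot_graph U (P1 \<union> P2))" by (rule quot_memI[OF q(1,2) c(4) q(3) c(6,7)])
        then show ?thesis using c(1) by simp
      next
        assume "e \<in> snd (quot_graph H P2)"
        then obtain C D v w where c: "e = {C, D}" "C \<in> P2" "D \<in> P2" "C \<noteq> D"
          "{v, w} \<in> snd H" "v \<subseteq> C" "w \<subseteq> D" by (rule quot_memE)
        have q: "C \<in> P1 \<union> P2" "D \<in> P1 \<union> P2" "{v, w} \<in> snd U" using c(2,3,5) unfolding gu_snd by auto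
        have "{C, D} \<in> snd (quot_graph U (P1 \<union> P2))" by (rule quot_memI[OF q(1,2) c(4) q(3) c(6,7)])
        then show ?thesis using c(1) by simp
      qed
    qed
  qed
  then show ?thesis unfolding graph_union_def by (simp add: prod_eq_iff)
qed

lemma restr_union:
  assumes P1: "admissible P1 G" and P2: "admissible P2 H"
  shows "restr_graph U (P1 \<union> P2) = graph_union (restr_graph G P1) (restr_graph H P2)"
proof -
  have eG: "\<Union>e \<subseteq> \<Union>(fst G) \<and> \<Union>e \<noteq> {}" if eE: "e \<in> snd G" for e
  proof -
    obtain v w where vw: "v \<in> fst G" "w \<in> fst G" "e = {v, w}" using is_graphD(3)[OF g eE] by blast
    then show ?thesis using graph_vne[OF g vw(1)] by auto
  qed
  have eH: "\<Union>e \<subseteq> \<Union>(fst H) \<and> \<Union>e \<noteq> {}" if eE: "e \<in> snd H" for e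
  proof -
    obtain v w where vw: "v \<in> fst H" "w \<in> fst H" "e = {v, w}" using is_graphD(3)[OF h eE] by blast
    then show ?thesis using graph_vne[OF h vw(1)] by auto
  qed
  have "snd (restr_graph U (P1 \<union> P2)) = snd (restr_graph G P1) \<union> snd (restr_graph H P2)"
  proof (rule set_eqI)
    fix e
    show "e \<in> snd (restr_graph U (P1 \<union> P2)) \<longleftrightarrow> e \<in> snd (restr_graph G P1) \<union> snd (restr_graph H P2)"
    proof
      assume "e \<in> snd (restr_graph U (P1 \<union> P2))"
      then have e: "e \<in> snd G \<or> e \<in> snd H" "\<exists>C\<in>P1 \<union> P2. \<Union>e \<subseteq> C" unfolding restr_mem gu_snd by auto
      obtain C where C: "C \<in> P1 \<union> P2" "\<Union>e \<subseteq> C" using e(2) by blast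
      show "e \<in> snd (restr_graph G P1) \<union> snd (restr_graph H P2)"
      proof (cases "e \<in> snd G")
        case True
        have "C \<in> P1"
        proof (rule ccontr)
          assume "C \<notin> P1" then have "C \<subseteq> \<Union>(fst H)" using C(1) sideP2[OF P2] by blast
          then show False using eG[OF True] C(2) d by blast
        qed
        then have "e \<in> snd (restr_graph G P1)" unfolding restr_mem using True C(2) by blast
        then show ?thesis by blast
      next
        case False
        then have eh: "e \<in> snd H" using e(1) by blast
        have "C \<in> P2"
        proof (rule ccontr)
          assume "C \<notin> P2" then have "C \<subseteq> \<Union>(fst G)" using C(1) sideP1[OF P1] by blast
          then show False using eH[OF eh] C(2) d by blast
        qed
        then have "e \<in> snd (restr_graph H P2)" unfolding restr_mem using eh C(2) by blast
        then show ?thesis by blast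
      qed
    next
      assume "e \<in> snd (restr_graph G P1) \<union> snd (restr_graph H P2)"
      then have "e \<in> snd (restr_graph G P1) \<or> e \<in> snd (restr_graph H P2)" by simp
      then have "(e \<in> snd G \<and> (\<exists>C\<in>P1. \<Union>e \<subseteq> C)) \<or> (e \<in> snd H \<and> (\<exists>C\<in>P2. \<Union>e \<subseteq> C))"
        unfolding restr_mem .
      then have "e \<in> snd G \<union> snd H" "\<exists>C\<in>P1 \<union> P2. \<Union>e \<subseteq> C" by blast+
      then show "e \<in> snd (restr_graph U (P1 \<union> P2))" unfolding restr_mem gu_snd by blast
    qed
  qed
  then show ?thesis unfolding graph_union_def by (simp add: prod_eq_iff)
qed

lemma split_left: "admissible P1 G \<Longrightarrow> admissible P2 H \<Longrightarrow> {C \<in> P1 \<union> P2. C \<subseteq> \<Union>(fst G)} = P1"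
proof -
  assume P1: "admissible P1 G" and P2: "admissible P2 H"
  have "\<not> C \<subseteq> \<Union>(fst G)" if "C \<in> P2" for C
    using sideP2[OF P2 that] partition_ne[OF admD(1)[OF P2] that] d by blast
  then show ?thesis using sideP1[OF P1] by blast
qed

lemma split_right: "admissible P1 G \<Longrightarrow> admissible P2 H \<Longrightarrow> {C \<in> P1 \<union> P2. C \<subseteq> \<Union>(fst H)} = P2"
proof -
  assume P1: "admissible P1 G" and P2: "admissible P2 H"
  have "\<not> C \<subseteq> \<Union>(fst H)" if "C \<in> P1" for C
    using sideP1[OF P1 that] partition_ne[OF admD(1)[OF P1] that] d by blast
  then show ?thesis using sideP2[OF P2] by blast
qed

lemma adm_bij_union:
  "bij_betw (\<lambda>(P1, P2). P1 \<union> P2) ({P. admissible P G} \<times> {P. admissible P H}) {P. admissible P U}"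
proof (rule bij_betw_byWitness[where f'="\<lambda>P. ({C \<in> P. C \<subseteq> \<Union>(fst G)}, {C \<in> P. C \<subseteq> \<Union>(fst H)})"])
  show "\<forall>a\<in>{P. admissible P G} \<times> {P. admissible P H}.
      (\<lambda>P. ({C \<in> P. C \<subseteq> \<Union>(fst G)}, {C \<in> P. C \<subseteq> \<Union>(fst H)})) ((\<lambda>(P1, P2). P1 \<union> P2) a) = a"
  proof
    fix a assume "a \<in> {P. admissible P G} \<times> {P. admissible P H}"
    then obtain P1 P2 where a: "a = (P1, P2)" "admissible P1 G" "admissible P2 H" by blast
    show "(\<lambda>P. ({C \<in> P. C \<subseteq> \<Union>(fst G)}, {C \<in> P. C \<subseteq> \<Union>(fst H)})) ((\<lambda>(P1, P2). P1 \<union> P2) a) = a"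
      using split_left[OF a(2,3)] split_right[OF a(2,3)] a(1) by simp
  qed
  show "\<forall>a'\<in>{P. admissible P U}.
      (\<lambda>(P1, P2). P1 \<union> P2) ((\<lambda>P. ({C \<in> P. C \<subseteq> \<Union>(fst G)}, {C \<in> P. C \<subseteq> \<Union>(fst H)})) a') = a'"
  proof
    fix P assume "P \<in> {P. admissible P U}"
    then have P: "admissible P U" by simp
    show "(\<lambda>(P1, P2). P1 \<union> P2) ((\<lambda>P. ({C \<in> P. C \<subseteq> \<Union>(fst G)}, {C \<in> P. C \<subseteq> \<Union>(fst H)})) P) = P"
      using adm_U_split[OF P] by simp
  qed
  show "(\<lambda>(P1, P2). P1 \<union> P2) ` ({P. admissible P G} \<times> {P. admissible P H}) \<subseteq> {P. admissible P U}"
    using adm_union by auto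
  show "(\<lambda>P. ({C \<in> P. C \<subseteq> \<Union>(fst G)}, {C \<in> P. C \<subseteq> \<Union>(fst H)})) ` {P. admissible P U}
      \<subseteq> {P. admissible P G} \<times> {P. admissible P H}"
  proof
    fix x assume "x \<in> (\<lambda>P. ({C \<in> P. C \<subseteq> \<Union>(fst G)}, {C \<in> P. C \<subseteq> \<Union>(fst H)})) ` {P. admissible P U}"
    then obtain P where P: "admissible P U" "x = ({C \<in> P. C \<subseteq> \<Union>(fst G)}, {C \<in> P. C \<subseteq> \<Union>(fst H)})" by blast
    have "admissible {C \<in> P. C \<subseteq> \<Union>(fst G)} G" by (rule adm_U_left[OF P(1)])
    moreover have "admissible {C \<in> P. C \<subseteq> \<Union>(fst H)} H"
      by (rule adm_U_right[OF two_graphs_axioms P(1)])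
    ultimately show "x \<in> {P. admissible P G} \<times> {P. admissible P H}" using P(2) by simp
  qed
qed

end


lemma card_restr_le: "is_graph G \<Longrightarrow> card (snd (restr_graph G P)) \<le> card (snd G)"
  using restr_snd_sub graph_finite_E by (metis card_mono)

lemma card_restr_lt: "is_graph G \<Longrightarrow> admissible P G \<Longrightarrow> P \<noteq> KK G \<Longrightarrow> card (snd (restr_graph G P)) < card (snd G)"
proof -
  assume g: "is_graph G" and P: "admissible P G" and ne: "P \<noteq> KK G"
  have "\<not> internal P G" using adm_internal_iff[OF g P] ne by simp
  then have "snd (restr_graph G P) \<subset> snd G" using restr_snd_sub[of G P] internal_iff[of P G] by auto
  then show ?thesis using graph_finite_E[OF g] by (rule psubset_card_mono[rotated])
qed

lemma mu_inv_mult: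
  assumes ch: "character lam" and nz: "nzb lam"
  shows "is_graph G \<Longrightarrow> is_graph H \<Longrightarrow> \<Union>(fst G) \<inter> \<Union>(fst H) = {} \<Longrightarrow>
    mu_inv lam (graph_union G H) = mu_inv lam G * mu_inv lam H"
proof (induction "card (snd G) + card (snd H)" arbitrary: G H rule: less_induct)
  case less
  note g = less.prems(1) and h = less.prems(2) and d = less.prems(3)
  interpret tg: two_graphs G H using g h d by unfold_locales
  define mu where "mu = mu_inv lam"
  define AG where "AG = {P. admissible P G}"
  define AH where "AH = {P. admissible P H}"
  define S where "S = AG \<times> AH"
  define k where "k = (KK G, KK H)"
  define T where "T x = lam (quot_graph G (fst x)) * lam (quot_graph H (snd x))" for x
  have finS: "finite S" unfolding S_def AG_def AH_def using adm_finite[OF g] adm_finite[OF h] by simp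
  have kS: "k \<in> S" unfolding k_def S_def AG_def AH_def using KK_adm[OF g] KK_adm[OF h] by simp
  have Tk: "T k \<noteq> 0" unfolding T_def k_def using lam_quot_KK[OF ch nz g] lam_quot_KK[OF ch nz h] by simp
  have rG: "restr_graph G (KK G) = G" using internal_restr KK_internal[OF g] by blast
  have rH: "restr_graph H (KK H) = H" using internal_restr KK_internal[OF h] by blast
  have lamU: "lam (quot_graph tg.U (P1 \<union> P2)) = lam (quot_graph G P1) * lam (quot_graph H P2)"
    if P1: "admissible P1 G" and P2: "admissible P2 H" for P1 P2
  proof -
    have gq1: "is_graph (quot_graph G P1)" using is_graph_quot[OF g admD(1)[OF P1]] .
    have gq2: "is_graph (quot_graph H P2)" using is_graph_quot[OF h admD(1)[OF P2]] .
    have "\<Union>(fst (quot_graph G P1)) = \<Union>(fst G)" using partition_Un[OF admD(1)[OF P1]] by simp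
    moreover have "\<Union>(fst (quot_graph H P2)) = \<Union>(fst H)" using partition_Un[OF admD(1)[OF P2]] by simp
    ultimately have dq: "\<Union>(fst (quot_graph G P1)) \<inter> \<Union>(fst (quot_graph H P2)) = {}" using d by simp
    show ?thesis unfolding tg.quot_union[OF P1 P2] using charD(2)[OF ch gq1 gq2 dq] .
  qed
  define L where "L x = T x * mu (graph_union (restr_graph G (fst x)) (restr_graph H (snd x)))" for x
  define R where "R x = T x * (mu (restr_graph G (fst x)) * mu (restr_graph H (snd x)))" for x
  have "eps' tg.U = char_prod lam mu tg.U" unfolding mu_def using mu_inv_eq[OF ch nz tg.gU] by simp
  also have "\<dots> = (\<Sum>P\<in>{P. admissible P tg.U}. lam (quot_graph tg.U P) * mu (restr_graph tg.U P))"
    unfolding char_prod_def ..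
  also have "\<dots> = (\<Sum>x\<in>S. (\<lambda>P. lam (quot_graph tg.U P) * mu (restr_graph tg.U P)) ((\<lambda>(P1, P2). P1 \<union> P2) x))"
    unfolding S_def AG_def AH_def by (rule sum.reindex_bij_betw[OF tg.adm_bij_union, symmetric])
  also have "\<dots> = (\<Sum>x\<in>S. L x)"
  proof (rule sum.cong[OF refl])
    fix x assume "x \<in> S"
    then obtain P1 P2 where x: "x = (P1, P2)" "admissible P1 G" "admissible P2 H" unfolding S_def AG_def AH_def by blast
    show "(\<lambda>P. lam (quot_graph tg.U P) * mu (restr_graph tg.U P)) ((\<lambda>(P1, P2). P1 \<union> P2) x) = L x"
      unfolding L_def T_def x(1) using lamU[OF x(2,3)] tg.restr_union[OF x(2,3)] by simp
  qed
  finally have eU: "eps' tg.U = (\<Sum>x\<in>S. L x)" .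
  have "eps' G * eps' H = char_prod lam mu G * char_prod lam mu H"
    unfolding mu_def using mu_inv_eq[OF ch nz g] mu_inv_eq[OF ch nz h] by simp
  also have "\<dots> = (\<Sum>P1\<in>AG. \<Sum>P2\<in>AH. (lam (quot_graph G P1) * mu (restr_graph G P1)) * (lam (quot_graph H P2) * mu (restr_graph H P2)))"
    unfolding char_prod_def AG_def AH_def by (rule sum_product)
  also have "\<dots> = (\<Sum>x\<in>S. R x)"
    unfolding S_def sum.cartesian_product R_def T_def by (intro sum.cong) (auto simp: mult_ac)
  finally have eGH: "eps' G * eps' H = (\<Sum>x\<in>S. R x)" .
  have eps_mult: "eps' tg.U = eps' G * eps' H" unfolding eps'_def gu_snd by simp
  have rest: "(\<Sum>x\<in>S - {k}. L x) = (\<Sum>x\<in>S - {k}. R x)"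
  proof (rule sum.cong[OF refl])
    fix x assume "x \<in> S - {k}"
    then obtain P1 P2 where x: "x = (P1, P2)" "admissible P1 G" "admissible P2 H" "(P1, P2) \<noteq> k"
      unfolding S_def AG_def AH_def by blast
    have le1: "card (snd (restr_graph G P1)) \<le> card (snd G)" using card_restr_le[OF g] .
    have le2: "card (snd (restr_graph H P2)) \<le> card (snd H)" using card_restr_le[OF h] .
    have "P1 \<noteq> KK G \<or> P2 \<noteq> KK H" using x(4) unfolding k_def by auto
    then have lt: "card (snd (restr_graph G P1)) + card (snd (restr_graph H P2)) < card (snd G) + card (snd H)"
    proof
      assume "P1 \<noteq> KK G"
      then have "card (snd (restr_graph G P1)) < card (snd G)" using card_restr_lt[OF g x(2)] by blast
      then show ?thesis using le2 by linarith
    next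
      assume "P2 \<noteq> KK H"
      then have "card (snd (restr_graph H P2)) < card (snd H)" using card_restr_lt[OF h x(3)] by blast
      then show ?thesis using le1 by linarith
    qed
    have dr: "\<Union>(fst (restr_graph G P1)) \<inter> \<Union>(fst (restr_graph H P2)) = {}" using d by simp
    have "mu (graph_union (restr_graph G P1) (restr_graph H P2)) = mu (restr_graph G P1) * mu (restr_graph H P2)"
      unfolding mu_def by (rule less.hyps[OF lt is_graph_restr[OF g] is_graph_restr[OF h] dr])
    then show "L x = R x" unfolding L_def R_def x(1) by simp
  qed
  have s1: "L k + (\<Sum>x\<in>S - {k}. L x) = eps' tg.U" using eU sum.remove[OF finS kS, of L] by simp
  have s2: "R k + (\<Sum>x\<in>S - {k}. R x) = eps' G * eps' H" using eGH sum.remove[OF finS kS, of R] by simp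
  have "L k + (\<Sum>x\<in>S - {k}. L x) = R k + (\<Sum>x\<in>S - {k}. R x)"
    unfolding s1 s2 by (rule eps_mult)
  then have "L k = R k" using rest by simp
  then have "T k * mu tg.U = T k * (mu G * mu H)" unfolding L_def R_def k_def using rG rH by simp
  then show ?case using Tk unfolding mu_def by simp
qed

lemma mu_inv_character:
  assumes ch: "character lam" and nz: "nzb lam"
  shows "character (mu_inv lam)"
  unfolding character_def
proof (intro conjI)
  show "\<forall>G f. is_graph G \<and> inj_on f (\<Union>(fst G)) \<longrightarrow> mu_inv lam (map_graph f G) = mu_inv lam G"
    by (intro allI impI, elim conjE) (rule mu_inv_map[OF ch nz])
  show "\<forall>G H. is_graph G \<and> is_graph H \<and> \<Union>(fst G) \<inter> \<Union>(fst H) = {} \<longrightarrow>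
      mu_inv lam (graph_union G H) = mu_inv lam G * mu_inv lam H"
    by (intro allI impI, elim conjE) (rule mu_inv_mult[OF ch nz])
  show "mu_inv lam empty_graph = 1" by (rule mu_inv_empty[OF ch])
qed

lemma mu_inv_nzb:
  assumes "nzb lam"
  shows "nzb (mu_inv lam)"
  unfolding nzb_def
proof (intro allI impI)
  fix A :: "nat set" assume A: "finite A \<and> A \<noteq> {}"
  then have "lam (bullet A) \<noteq> 0" using assms unfolding nzb_def by blast
  then show "mu_inv lam (bullet A) \<noteq> 0" using mu_inv_bullet[of A lam] A by simp
qed

lemma char_prod_cong_right:
  assumes g: "is_graph G" and e: "\<And>H. is_graph H \<Longrightarrow> b H = b' H"
  shows "char_prod a b G = char_prod a b' G"
  unfolding char_prod_def using e[OF is_graph_restr[OF g]] by simp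

lemma char_prod_cong_left:
  assumes g: "is_graph G" and e: "\<And>H. is_graph H \<Longrightarrow> a H = a' H"
  shows "char_prod a b G = char_prod a' b G"
  unfolding char_prod_def
proof (rule sum.cong[OF refl])
  fix P assume "P \<in> {P. admissible P G}"
  then have "is_graph (quot_graph G P)" using is_graph_quot[OF g admD(1)] by blast
  then show "a (quot_graph G P) * b (restr_graph G P) = a' (quot_graph G P) * b (restr_graph G P)"
    using e by simp
qed

lemma bullet_prod:
  assumes A: "finite A" "A \<noteq> {}"
  shows "char_prod a b (bullet A) = a (bullet A) * b (bullet A)"
proof -
  have g: "is_graph (bullet A)" using is_graph_bullet[OF A] .
  have e: "snd (bullet A) = {}" unfolding bullet_def by simp
  have "{P. admissible P (bullet A)} = {fst (bullet A)}"
  proof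
    show "{P. admissible P (bullet A)} \<subseteq> {fst (bullet A)}"
      using adm_noedge_unique[OF g] restr_snd_sub[of "bullet A"] e by blast
    show "{fst (bullet A)} \<subseteq> {P. admissible P (bullet A)}" using V_adm[OF g] by simp
  qed
  moreover have "quot_graph (bullet A) (fst (bullet A)) = bullet A" using quot_V[OF g] .
  moreover have "restr_graph (bullet A) (fst (bullet A)) = bullet A"
    using V_restr_empty[OF g] e by (simp add: prod_eq_iff)
  ultimately show ?thesis unfolding char_prod_def by simp
qed

theorem lemma49:
  fixes lam :: "graph \<Rightarrow> 'k::field"
  assumes "character lam"
  shows "char_invertible lam \<longleftrightarrow> (\<forall>A. finite A \<and> A \<noteq> {} \<longrightarrow> lam (bullet A) \<noteq> 0)"
proof
  assume "char_invertible lam"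
  then obtain mu where mu: "character mu" "\<And>G. is_graph G \<Longrightarrow> char_prod lam mu G = eps' G"
    unfolding char_invertible_def by blast
  show "\<forall>A. finite A \<and> A \<noteq> {} \<longrightarrow> lam (bullet A) \<noteq> 0"
  proof (intro allI impI)
    fix A :: "nat set" assume A: "finite A \<and> A \<noteq> {}"
    have "char_prod lam mu (bullet A) = 1" using mu(2)[OF is_graph_bullet] A unfolding eps'_def bullet_def by simp
    have A': "finite A" "A \<noteq> {}" using A by simp_all
    then have "lam (bullet A) * mu (bullet A) = 1" using bullet_prod[OF A', of lam mu] \<open>char_prod lam mu (bullet A) = 1\<close> by simp
    then show "lam (bullet A) \<noteq> 0" by auto
  qed
next
  assume "\<forall>A. finite A \<and> A \<noteq> {} \<longrightarrow> lam (bullet A) \<noteq> 0"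
  then have nz: "nzb lam" unfolding nzb_def .
  note ch = assms
  define mu where "mu = mu_inv lam"
  define rho where "rho = mu_inv mu"
  have chmu: "character mu" unfolding mu_def by (rule mu_inv_character[OF ch nz])
  have nzmu: "nzb mu" unfolding mu_def by (rule mu_inv_nzb[OF nz])
  have r1: "char_prod lam mu G = eps' G" if "is_graph G" for G
    unfolding mu_def by (rule mu_inv_eq[OF ch nz that])
  have r2: "char_prod mu rho G = eps' G" if "is_graph G" for G
    unfolding rho_def by (rule mu_inv_eq[OF chmu nzmu that])
  have lr: "lam G = rho G" if g: "is_graph G" for G
  proof -
    have "lam G = char_prod lam eps' G" by (rule unit_right[OF g, symmetric])
    also have "\<dots> = char_prod lam (char_prod mu rho) G"
      by (rule char_prod_cong_right[OF g]) (simp add: r2)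
    also have "\<dots> = char_prod (char_prod lam mu) rho G" by (rule assoc[OF g, symmetric])
    also have "\<dots> = char_prod eps' rho G"
      by (rule char_prod_cong_left[OF g]) (simp add: r1)
    also have "\<dots> = rho G" using unit_left[OF g] .
    finally show ?thesis .
  qed
  have l1: "char_prod mu lam G = eps' G" if g: "is_graph G" for G
  proof -
    have "char_prod mu lam G = char_prod mu rho G" by (rule char_prod_cong_right[OF g]) (simp add: lr)
    then show ?thesis using r2[OF g] by simp
  qed
  show "char_invertible lam" unfolding char_invertible_def
    using chmu r1 l1 by blast
qed


end
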